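(* Let $M \ge 2$ be an integer, $\mathcal A \subset \{0,\dots,M-1\}$ nonempty, $\chi \in C_c^\infty((0,1);[0,1])$, $\delta = \log|\mathcal A|/\log M$, and let $N = KM$ with $K \in \mathbb N$. Let $\ell \le \frac{\log N}{\log M}$ be a positive integer and let $d_1,\dots,d_\ell$ be real numbers with $$0 < \frac{d_j}{N} \le \frac{2}{M} d(\operatorname{supp}\chi, 0), \qquad j = 1,\dots,\ell.$$ Then there exist a Fourier multiplier $A : \ell^2_N \to \ell^2_N$ (i.e. $A = \mathcal F_N^* D \mathcal F_N$ with $D$ diagonal) and families of operators $Z(\lambda), \mathcal R(\lambda) : \ell^2_N \to \ell^2_N$, $\lambda \in \mathbb C \setminus \{0\}$, such that $$I = Z(\lambda)(B_N - \lambda) + \mathcal R(\lambda) + A,$$ and 1. $\displaystyle \|\mathcal R(\lambda)\|_{\ell^2_N\to\ell^2_N} \le \sum_{j=0}^{\ell-1} |\lambda|^{-j-1} \tilde g_\chi(d_{\ell-j})$, where $\tilde g_\chi:(0,\infty)\to[0,\infty)$ is a function satisfying: for every $n$ there is $C_n>0$ with $\tilde g_\chi(x)\le C_n x^{-n}$, and if $\chi \in \mathcal G^s_c((0,1))$ for some $s>1$ then $\tilde g_\chi(x) \le Ce^{-cx^{1/s}}$ for some $C,c>0$, all constants depending only on $\chi$; 2. $\displaystyle \operatorname{rank} A \le 2 M^{\ell\delta}\Big[\frac{N}{M^\ell} + 2\sum_{k=1}^{\ell}\frac{d_k}{M^{\ell-k}}\Big]$.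
   Context: For $N \in \mathbb N$, $\mathbb Z_N \simeq \{0,\dots,N-1\}$, $\ell^2_N = \ell^2(\mathbb Z_N)$, and $\mathcal F_N u(j) = N^{-1/2}\sum_{m=0}^{N-1} e^{-2\pi i jm/N} u(m)$. For $N = KM$ and $a \in \{0,\dots,M-1\}$, $\Pi_a:\ell^2_N\to\ell^2_K$, $\Pi_a u(j) = u(j+aK)$, and the quantum open baker's map is $B_N = \sum_{a \in \mathcal A} \mathcal F_N^*\Pi_a^* \chi_K \mathcal F_K \chi_K \Pi_a$ with $\chi_K$ multiplication by $j\mapsto\chi(j/K)$ on $\ell^2_K$. On $[0,1]$ with $0,1$ identified, $d(x,y)=\min\{|x-y|,1-|x-y|\}$ and $d(U,V)=\inf_{x\in U,y\in V}d(x,y)$. $\mathcal G^s_c((0,1))$ ($s>1$) is the set of $f\in C_c^\infty(\mathbb R)$, $\operatorname{supp} f\subset(0,1)$, such that for every compact $K'$ there is $C_{K',f}$ with $\sup_{K'}|\partial^\alpha f| \le C_{K',f}^{\alpha+1}(\alpha!)^s$ for all $\alpha\ge 0$. *)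

theory Defs
  imports "HOL-Analysis.Analysis" "Jordan_Normal_Form.Schur_Decomposition" "Jordan_Normal_Form.DL_Rank"
begin

definition circ_dist :: "real \<Rightarrow> real \<Rightarrow> real" where
  "circ_dist x y = min \<bar>x - y\<bar> (1 - \<bar>x - y\<bar>)"

definition set_circ_dist :: "real set \<Rightarrow> real set \<Rightarrow> real" where
  "set_circ_dist U V = Inf {circ_dist x y | x y. x \<in> U \<and> y \<in> V}"

definition fsupp :: "(real \<Rightarrow> real) \<Rightarrow> real set" where
  "fsupp f = closure {x. f x \<noteq> 0}"

definition smooth_real :: "(real \<Rightarrow> real) \<Rightarrow> bool" where
  "smooth_real f \<longleftrightarrow> (\<forall>n x. (deriv ^^ n) f differentiable (at x))"

definition Cc_inf_01 :: "(real \<Rightarrow> real) \<Rightarrow> bool" where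
  "Cc_inf_01 f \<longleftrightarrow> smooth_real f \<and> compact (fsupp f) \<and> fsupp f \<subseteq> {0<..<1}"

definition gevrey_c01 :: "real \<Rightarrow> (real \<Rightarrow> real) \<Rightarrow> bool" where
  "gevrey_c01 s f \<longleftrightarrow> Cc_inf_01 f \<and>
     (\<forall>K'. compact K' \<longrightarrow> (\<exists>C. \<forall>\<alpha>::nat. \<forall>x\<in>K'.
         \<bar>(deriv ^^ \<alpha>) f x\<bar> \<le> C ^ (\<alpha> + 1) * (fact \<alpha>) powr s))"

definition l2norm :: "complex vec \<Rightarrow> real" where
  "l2norm u = sqrt (\<Sum>i<dim_vec u. (cmod (vec_index u i))\<^sup>2)"

definition op_norm :: "nat \<Rightarrow> complex mat \<Rightarrow> real" where
  "op_norm N A = Sup {l2norm (A *\<^sub>v u) | u. u \<in> carrier_vec N \<and> l2norm u \<le> 1}"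

definition fourier :: "nat \<Rightarrow> complex mat" where
  "fourier N = mat N N (\<lambda>(j, m).
      exp (- 2 * pi * \<i> * of_nat j * of_nat m / of_nat N) / complex_of_real (sqrt (real N)))"

definition Pi_op :: "nat \<Rightarrow> nat \<Rightarrow> nat \<Rightarrow> complex mat" where
  "Pi_op K M a = mat K (K * M) (\<lambda>(j, m). if m = j + a * K then 1 else 0)"

definition chi_op :: "(real \<Rightarrow> real) \<Rightarrow> nat \<Rightarrow> complex mat" where
  "chi_op chi K = mat K K (\<lambda>(i, j). if i = j then complex_of_real (chi (real j / real K)) else 0)"

definition baker :: "nat \<Rightarrow> nat set \<Rightarrow> (real \<Rightarrow> real) \<Rightarrow> nat \<Rightarrow> complex mat" where
  "baker M \<A> chi K = mat (K * M) (K * M) (\<lambda>(i, j).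
     \<Sum>a\<in>\<A>. (mat_adjoint (fourier (K * M)) * mat_adjoint (Pi_op K M a) * chi_op chi K
              * fourier K * chi_op chi K * Pi_op K M a) $$ (i, j))"

definition fourier_multiplier :: "nat \<Rightarrow> complex mat \<Rightarrow> bool" where
  "fourier_multiplier N A \<longleftrightarrow> (\<exists>D. D \<in> carrier_mat N N \<and> diagonal_mat D \<and>
      A = mat_adjoint (fourier N) * D * fourier N)"

end

theory Submission
  imports Defs
begin


lemma fsupp_zero: "x \<notin> fsupp f \<Longrightarrow> f x = 0"
  unfolding fsupp_def by (metis (mono_tags, lifting) closure_subset mem_Collect_eq subsetD)

lemma Cc_zero_out: assumes "Cc_inf_01 f" "x \<le> 0 \<or> x \<ge> 1" shows "f x = 0"
proof -
  have "x \<notin> fsupp f" using assms unfolding Cc_inf_01_def by auto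
  then show ?thesis by (rule fsupp_zero)
qed

lemma smooth_DERIV: assumes "smooth_real f"
  shows "((deriv ^^ n) f has_real_derivative (deriv ^^ Suc n) f x) (at x)"
  using assms unfolding smooth_real_def
  by (simp add: DERIV_deriv_iff_real_differentiable)

lemma smooth_cont: "smooth_real f \<Longrightarrow> continuous (at x) ((deriv ^^ n) f)"
  using smooth_DERIV DERIV_isCont by blast

lemma smooth_deriv_zero_out:
  assumes "smooth_real f" "x \<notin> fsupp f"
  shows "(deriv ^^ n) f x = 0"
proof -
  have "\<forall>y. y \<notin> fsupp f \<longrightarrow> (deriv ^^ n) f y = 0"
  proof (induction n)
    case 0 then show ?case using fsupp_zero by auto
  next
    case (Suc n)
    show ?case
    proof (intro allI impI)
      fix y assume y: "y \<notin> fsupp f"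
      have op: "open (- fsupp f)" unfolding fsupp_def by auto
      have "((\<lambda>_. 0) has_real_derivative 0) (at y)" by simp
      then have "((deriv ^^ n) f has_real_derivative 0) (at y)"
        apply (rule has_field_derivative_transform_within_open[OF _ op])
        using y Suc.IH by auto
      then show "(deriv ^^ Suc n) f y = 0" using DERIV_imp_deriv by simp
    qed
  qed
  then show ?thesis using assms by auto
qed

lemma Cc_deriv_bounded:
  assumes "Cc_inf_01 f" shows "\<exists>B. \<forall>x. \<bar>(deriv ^^ n) f x\<bar> \<le> B"
proof -
  have sm: "smooth_real f" and sub: "fsupp f \<subseteq> {0<..<1}" using assms unfolding Cc_inf_01_def by auto
  have "continuous_on {0..1} ((deriv ^^ n) f)"
    using smooth_cont[OF sm] continuous_at_imp_continuous_on by blast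
  then have "compact ((deriv ^^ n) f ` {0..1})" by (rule compact_continuous_image) simp
  then obtain B where B: "\<forall>y\<in>(deriv ^^ n) f ` {0..1}. norm y \<le> B"
    using compact_imp_bounded bounded_iff by metis
  have "\<bar>(deriv ^^ n) f x\<bar> \<le> max B 0" for x
  proof (cases "x \<in> {0..1}")
    case True then show ?thesis using B by force
  next
    case False then have "x \<notin> fsupp f" using sub by auto
    then show ?thesis using smooth_deriv_zero_out[OF sm] by simp
  qed
  then show ?thesis by blast
qed

definition Bd :: "(real \<Rightarrow> real) \<Rightarrow> nat \<Rightarrow> real" where
  "Bd f n = Sup (range (\<lambda>x. \<bar>(deriv ^^ n) f x\<bar>))"

lemma Bd_bound: assumes "Cc_inf_01 f" shows "\<bar>(deriv ^^ n) f x\<bar> \<le> Bd f n"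
proof -
  obtain B where "\<forall>x. \<bar>(deriv ^^ n) f x\<bar> \<le> B" using Cc_deriv_bounded[OF assms] by blast
  then have "bdd_above (range (\<lambda>x. \<bar>(deriv ^^ n) f x\<bar>))" by (auto intro: bdd_aboveI)
  then show ?thesis unfolding Bd_def by (intro cSup_upper) auto
qed

lemma Bd_nonneg: assumes "Cc_inf_01 f" shows "0 \<le> Bd f n"
  using Bd_bound[OF assms, of n 0] by linarith

lemma Bd_le: assumes "\<And>x. \<bar>(deriv ^^ n) f x\<bar> \<le> C" shows "Bd f n \<le> C"
  unfolding Bd_def using assms by (intro cSup_least) auto

section \<open>Finite differences\<close>

definition fdiff :: "real \<Rightarrow> (real \<Rightarrow> real) \<Rightarrow> real \<Rightarrow> real" where
  "fdiff h F = (\<lambda>x. F (x - h) - F x)"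

lemma fdiff_apply: "fdiff h F x = F (x - h) - F x" by (simp add: fdiff_def)

lemma fdiff_funpow_Suc: "((fdiff h) ^^ Suc n) F x = ((fdiff h) ^^ n) F (x - h) - ((fdiff h) ^^ n) F x"
  by (simp only: funpow.simps comp_apply fdiff_apply)

lemma DERIV_fdiff:
  assumes "smooth_real f"
  shows "(fdiff h ((deriv ^^ k) f) has_real_derivative fdiff h ((deriv ^^ Suc k) f) x) (at x)"
proof -
  have d1: "((deriv ^^ k) f has_real_derivative (deriv ^^ Suc k) f (x + - h)) (at (x + - h))"
    using smooth_DERIV[OF assms] .
  have d1': "((\<lambda>x. (deriv ^^ k) f (x + - h)) has_real_derivative (deriv ^^ Suc k) f (x + - h)) (at x)"
    using DERIV_shift d1 by blast
  show ?thesis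
    unfolding fdiff_def using DERIV_diff[OF d1' smooth_DERIV[OF assms]] by simp
qed

lemma deriv_fdiff_commute:
  assumes "smooth_real f"
  shows "(deriv ^^ k) (fdiff h f) = fdiff h ((deriv ^^ k) f)"
proof (induction k)
  case 0 show ?case by simp
next
  case (Suc k)
  have "deriv (fdiff h ((deriv ^^ k) f)) x = fdiff h ((deriv ^^ Suc k) f) x" for x
    using DERIV_fdiff[OF assms] by (rule DERIV_imp_deriv)
  then have "deriv (fdiff h ((deriv ^^ k) f)) = fdiff h ((deriv ^^ Suc k) f)" by (rule ext)
  then show ?case using Suc.IH by simp
qed

lemma smooth_fdiff: assumes "smooth_real f" shows "smooth_real (fdiff h f)"
  unfolding smooth_real_def deriv_fdiff_commute[OF assms] real_differentiable_def
  using DERIV_fdiff[OF assms] by blast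

lemma fdiff_bound:
  assumes "h \<ge> 0"
  shows "smooth_real f \<Longrightarrow> (\<forall>x. \<bar>(deriv ^^ n) f x\<bar> \<le> B) \<Longrightarrow> \<bar>((fdiff h) ^^ n) f x\<bar> \<le> h ^ n * B"
proof (induction n arbitrary: f B x)
  case 0 then show ?case by simp
next
  case (Suc n)
  have sm': "smooth_real (fdiff h f)" using smooth_fdiff Suc.prems(1) .
  have bd: "\<forall>x. \<bar>(deriv ^^ n) (fdiff h f) x\<bar> \<le> h * B"
  proof
    fix y
    have "\<bar>(deriv ^^ n) f (y - h) - (deriv ^^ n) f y\<bar> \<le> h * B"
    proof (cases "h = 0")
      case True then show ?thesis by simp
    next
      case False
      then have "y - h < y" using assms by simp
      from MVT2[OF this, of "(deriv ^^ n) f" "(deriv ^^ Suc n) f"]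
      obtain z where "(deriv ^^ n) f y - (deriv ^^ n) f (y - h) = (y - (y - h)) * (deriv ^^ Suc n) f z"
        using smooth_DERIV[OF Suc.prems(1)] by blast
      then have "\<bar>(deriv ^^ n) f y - (deriv ^^ n) f (y - h)\<bar> = h * \<bar>(deriv ^^ Suc n) f z\<bar>"
        using assms by (simp add: abs_mult)
      then have "\<bar>(deriv ^^ n) f (y - h) - (deriv ^^ n) f y\<bar> = h * \<bar>(deriv ^^ Suc n) f z\<bar>"
        by (simp add: abs_minus_commute)
      also have "\<dots> \<le> h * B" using Suc.prems(2) assms by (simp add: mult_left_mono)
      finally show ?thesis .
    qed
    then show "\<bar>(deriv ^^ n) (fdiff h f) y\<bar> \<le> h * B"
      using deriv_fdiff_commute[OF Suc.prems(1)] by (simp add: fdiff_def)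
  qed
  have "\<bar>(fdiff h ^^ n) (fdiff h f) x\<bar> \<le> h ^ n * (h * B)" using Suc.IH[OF sm' bd] .
  moreover have "((fdiff h) ^^ Suc n) f x = (fdiff h ^^ n) (fdiff h f) x"
    by (simp only: funpow_Suc_right comp_apply)
  ultimately show ?case by (simp add: mult.assoc mult.commute mult.left_commute)
qed

lemma fdiff_zero_left:
  assumes "h \<ge> 0" "\<And>x. x \<le> 0 \<Longrightarrow> f x = 0"
  shows "x \<le> 0 \<Longrightarrow> ((fdiff h) ^^ n) f x = 0"
proof (induction n arbitrary: x)
  case 0 then show ?case using assms by simp
next
  case (Suc n)
  have "x - h \<le> 0" using Suc.prems assms by simp
  then show ?case using Suc by (simp only: fdiff_funpow_Suc)
qed

section \<open>Summation by parts\<close>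

definition bdiff :: "(nat \<Rightarrow> real) \<Rightarrow> nat \<Rightarrow> real" where
  "bdiff c = (\<lambda>m. c (m - 1) - c m)"

lemma sbp_step:
  fixes \<omega> :: complex
  assumes "c 0 = 0" "\<forall>m\<ge>L. c m = 0"
  shows "(\<omega> - 1) * (\<Sum>m<L. of_real (c m) * \<omega> ^ m) = (\<Sum>m<Suc L. of_real (bdiff c m) * \<omega> ^ m)"
proof -
  have "(\<Sum>m<Suc L. of_real (bdiff c m) * \<omega> ^ m) =
     (\<Sum>m<Suc L. of_real (c (m-1)) * \<omega> ^ m) - (\<Sum>m<Suc L. of_real (c m) * \<omega> ^ m)"
    by (simp add: bdiff_def sum_subtractf algebra_simps)
  also have "(\<Sum>m<Suc L. of_real (c (m-1)) * \<omega> ^ m) = (\<Sum>m<L. of_real (c m) * \<omega> ^ Suc m)"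
    using sum.lessThan_Suc_shift[of "\<lambda>m. of_real (c (m-1)) * \<omega> ^ m" L] assms(1) by simp
  also have "(\<Sum>m<Suc L. of_real (c m) * \<omega> ^ m) = (\<Sum>m<L. of_real (c m) * \<omega> ^ m)"
    using assms(2) by simp
  finally show ?thesis by (simp add: sum_distrib_left sum_subtractf algebra_simps)
qed

lemma sbp:
  fixes \<omega> :: complex
  shows "\<forall>c L. c 0 = 0 \<longrightarrow> (\<forall>m\<ge>L. c m = 0) \<longrightarrow>
    (\<omega> - 1) ^ n * (\<Sum>m<L. of_real (c m) * \<omega> ^ m) = (\<Sum>m<L + n. of_real ((bdiff ^^ n) c m) * \<omega> ^ m)"
proof (induction n)
  case 0 then show ?case by simp
next
  case (Suc n)
  show ?case
  proof (intro allI impI)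
    fix c :: "nat \<Rightarrow> real" and L assume c0: "c 0 = 0" and cL: "\<forall>m\<ge>L. c m = 0"
    have b0: "bdiff c 0 = 0" by (simp add: bdiff_def)
    have bL: "\<forall>m\<ge>Suc L. bdiff c m = 0" using cL by (simp add: bdiff_def)
    have "(\<omega> - 1) ^ Suc n * (\<Sum>m<L. of_real (c m) * \<omega> ^ m)
        = (\<omega> - 1) ^ n * ((\<omega> - 1) * (\<Sum>m<L. of_real (c m) * \<omega> ^ m))" by (simp add: mult.assoc)
    also have "\<dots> = (\<omega> - 1) ^ n * (\<Sum>m<Suc L. of_real (bdiff c m) * \<omega> ^ m)"
      using sbp_step[OF c0 cL] by simp
    also have "\<dots> = (\<Sum>m<Suc L + n. of_real ((bdiff ^^ n) (bdiff c) m) * \<omega> ^ m)"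
      using Suc.IH b0 bL by blast
    finally show "(\<omega> - 1) ^ Suc n * (\<Sum>m<L. of_real (c m) * \<omega> ^ m) =
       (\<Sum>m<L + Suc n. of_real ((bdiff ^^ Suc n) c m) * \<omega> ^ m)"
      by (simp add: funpow_swap1)
  qed
qed

lemma bdiff_fdiff:
  assumes K: "K > 0" and f0: "\<And>x. x \<le> 0 \<Longrightarrow> f x = 0"
  shows "(bdiff ^^ n) (\<lambda>m. f (real m / real K)) m = ((fdiff (1 / real K)) ^^ n) f (real m / real K)"
proof (induction n arbitrary: m)
  case 0 then show ?case by simp
next
  case (Suc n)
  show ?case
  proof (cases m)
    case 0
    have "((fdiff (1 / real K)) ^^ n) f (0 - 1 / real K) = 0"
      by (rule fdiff_zero_left) (use f0 K in auto)
    moreover have "((fdiff (1 / real K)) ^^ n) f 0 = 0"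
      by (rule fdiff_zero_left) (use f0 K in auto)
    ultimately show ?thesis using 0 by (simp only: fdiff_funpow_Suc) (simp add: bdiff_def)
  next
    case (Suc m')
    have "real m / real K - 1 / real K = real m' / real K" using Suc K by (simp add: field_simps)
    then show ?thesis using Suc.IH Suc by (simp only: fdiff_funpow_Suc) (simp add: bdiff_def)
  qed
qed

lemma S_bound_raw:
  fixes \<omega> :: complex
  assumes chi: "Cc_inf_01 chi" and K: "K \<ge> 1" and w: "cmod \<omega> = 1"
  shows "cmod (\<omega> - 1) ^ n * cmod (\<Sum>m<K. of_real (chi (real m / real K)) * \<omega> ^ m)
     \<le> real (K + n) * ((1 / real K) ^ n * Bd chi n)"
proof -
  define c where "c = (\<lambda>m. chi (real m / real K))"
  have c0: "c 0 = 0" unfolding c_def using Cc_zero_out[OF chi] by simp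
  have cK: "\<forall>m\<ge>K. c m = 0" unfolding c_def using Cc_zero_out[OF chi] K by simp
  have f0: "\<And>x. x \<le> 0 \<Longrightarrow> chi x = 0" using Cc_zero_out[OF chi] by simp
  have sm: "smooth_real chi" using chi unfolding Cc_inf_01_def by simp
  have "cmod (\<omega> - 1) ^ n * cmod (\<Sum>m<K. of_real (c m) * \<omega> ^ m)
      = cmod ((\<omega> - 1) ^ n * (\<Sum>m<K. of_real (c m) * \<omega> ^ m))" by (simp add: norm_mult norm_power)
  also have "\<dots> = cmod (\<Sum>m<K + n. of_real ((bdiff ^^ n) c m) * \<omega> ^ m)"
    using sbp c0 cK by metis
  also have "\<dots> \<le> (\<Sum>m<K + n. cmod (of_real ((bdiff ^^ n) c m) * \<omega> ^ m))" by (rule norm_sum)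
  also have "\<dots> \<le> (\<Sum>m<K + n. (1 / real K) ^ n * Bd chi n)"
  proof (rule sum_mono)
    fix m
    have "cmod (of_real ((bdiff ^^ n) c m) * \<omega> ^ m) = \<bar>(bdiff ^^ n) c m\<bar>"
      using w by (simp add: norm_mult norm_power)
    also have "\<dots> = \<bar>((fdiff (1 / real K)) ^^ n) chi (real m / real K)\<bar>"
      unfolding c_def using bdiff_fdiff[of K chi n m] K f0 by simp
    also have "\<dots> \<le> (1 / real K) ^ n * Bd chi n"
      using fdiff_bound[of "1 / real K" chi n "Bd chi n"] sm Bd_bound[OF chi] by simp
    finally show "cmod (of_real ((bdiff ^^ n) c m) * \<omega> ^ m) \<le> (1 / real K) ^ n * Bd chi n" .
  qed
  also have "\<dots> = real (K + n) * ((1 / real K) ^ n * Bd chi n)" by simp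
  finally show ?thesis unfolding c_def .
qed

section \<open>Lower bound for exp(2 pi i theta) - 1\<close>

lemma sin_lower: fixes x :: real assumes "0 \<le> x" "x \<le> 2" shows "x / 3 \<le> sin x"
proof -
  have "\<bar>sin x - (\<Sum>m<3. sin_coeff m * x ^ m)\<bar> \<le> inverse (fact 3) * \<bar>x\<bar> ^ 3"
    by (rule Maclaurin_sin_bound)
  moreover have "(\<Sum>m<3. sin_coeff m * x ^ m) = x"
    by (simp add: numeral_3_eq_3 sin_coeff_def)
  moreover have "(fact 3 :: real) = 6" by (simp add: numeral_3_eq_3)
  ultimately have "\<bar>sin x - x\<bar> \<le> x ^ 3 / 6" using assms by simp
  then have "x - x ^ 3 / 6 \<le> sin x" by linarith
  moreover have "x ^ 3 \<le> 4 * x"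
  proof -
    have "x * x \<le> 2 * 2" using assms by (intro mult_mono) auto
    then have "x * x * x \<le> 4 * x" using assms by (intro mult_right_mono) auto
    then show ?thesis by (simp add: power3_eq_cube)
  qed
  ultimately show ?thesis by linarith
qed

definition nd :: "real \<Rightarrow> real" where "nd t = min \<bar>t\<bar> (1 - \<bar>t\<bar>)"

lemma abs_sin_pi_lower: assumes "\<bar>t\<bar> \<le> 1" shows "nd t / 2 \<le> \<bar>sin (pi * t)\<bar>"
proof -
  have pi2: "2 \<le> pi" "pi \<le> 4" using pi_ge_two pi_less_4 by auto
  have pos: "nd s / 2 \<le> sin (pi * s)" if s: "0 \<le> s" "s \<le> 1" for s
  proof (cases "s \<le> 1/2")
    case True
    have "pi * s \<le> 4 * (1/2)" using s True pi2 by (intro mult_mono) auto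
    then have "pi * s / 3 \<le> sin (pi * s)" using s pi2 by (intro sin_lower) auto
    moreover have "2 * s \<le> pi * s" using s pi2 by (intro mult_right_mono) auto
    then have "s \<le> pi * s / 3 * (3/2)" by simp
    moreover have "0 \<le> sin (pi * s)" using s pi2 by (intro sin_ge_zero) (auto simp: mult_left_le)
    ultimately show ?thesis unfolding nd_def using s by (simp add: abs_of_nonneg)
  next
    case False
    have e: "sin (pi * s) = sin (pi * (1 - s))" by (simp add: right_diff_distrib sin_pi_minus)
    have "pi * (1 - s) \<le> 4 * (1/2)" using s False pi2 by (intro mult_mono) auto
    then have "pi * (1 - s) / 3 \<le> sin (pi * (1 - s))" using s pi2 by (intro sin_lower) auto
    moreover have "2 * (1 - s) \<le> pi * (1 - s)" using s pi2 by (intro mult_right_mono) auto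
    then have "1 - s \<le> pi * (1 - s) / 3 * (3/2)" by simp
    moreover have "0 \<le> sin (pi * (1 - s))" using s pi2 by (intro sin_ge_zero) (auto simp: mult_left_le)
    ultimately show ?thesis unfolding nd_def e using s False by (simp add: abs_of_nonneg)
  qed
  show ?thesis
  proof (cases "t \<ge> 0")
    case True then show ?thesis using pos[of t] assms by auto
  next
    case False
    have "nd (-t) / 2 \<le> sin (pi * (-t))" using pos[of "-t"] assms False by auto
    then show ?thesis using False by (simp add: nd_def)
  qed
qed

lemma exp_minus_one_lower:
  assumes "\<bar>t\<bar> \<le> 1" shows "nd t \<le> cmod (exp (\<i> * of_real (2 * pi * t)) - 1)"
proof -
  have "cmod (exp (\<i> * of_real (2 * pi * t)) - 1) = 2 * \<bar>sin (pi * t)\<bar>"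
    using dist_exp_i_1[of "2 * pi * t"] by simp
  moreover have "0 \<le> nd t" using assms unfolding nd_def by auto
  ultimately show ?thesis using abs_sin_pi_lower[OF assms] by linarith
qed

section \<open>Lattice sums\<close>

lemma lattice_pt: fixes x :: real shows "1 / (1 + \<bar>x\<bar>)\<^sup>2 \<le> 2 * ((x + 1) / (1 + \<bar>x + 1\<bar>) - x / (1 + \<bar>x\<bar>))"
proof (cases "x \<ge> 0")
  case True
  have a: "\<bar>x + 1\<bar> = x + 1" "\<bar>x\<bar> = x" using True by auto
  have e: "(x + 1) / (x + 2) - x / (1 + x) = 1 / ((x + 1) * (x + 2))"
    using True by (simp add: field_simps)
  have "1 / ((x + 1) * (x + 1)) \<le> 2 / ((x + 1) * (x + 2))"
  proof -
    have "0 \<le> x * x" using True by simp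
    moreover have "2 * ((x + 1) * (x + 1)) - (x + 1) * (x + 2) = x * x + x" by (simp add: algebra_simps)
    ultimately have "(x + 1) * (x + 2) \<le> 2 * ((x + 1) * (x + 1))" using True by linarith
    then show ?thesis using True by (simp add: divide_simps)
  qed
  then show ?thesis unfolding a using e by (simp add: power2_eq_square add_ac)
next
  case False
  show ?thesis
  proof (cases "x \<le> -1")
    case True
    define u where "u = - x"
    have u: "u \<ge> 1" using True u_def by simp
    have a: "\<bar>x + 1\<bar> = u - 1" "\<bar>x\<bar> = u" "x = - u" using True u_def by auto
    have e: "(1 - u) / u + u / (1 + u) = 1 / (u * (1 + u))"
      using u by (simp add: field_simps)
    have "1 / ((1 + u) * (1 + u)) \<le> 2 / (u * (1 + u))"
    proof -
      have "u * (1 + u) \<le> 2 * ((1 + u) * (1 + u))" using u by (simp add: algebra_simps)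
      then show ?thesis using u by (simp add: divide_simps)
    qed
    moreover have "(x + 1) / (1 + \<bar>x + 1\<bar>) - x / (1 + \<bar>x\<bar>) = (1 - u) / u + u / (1 + u)"
      using a by simp
    moreover have "1 / (1 + \<bar>x\<bar>)\<^sup>2 = 1 / ((1 + u) * (1 + u))" using a by (simp add: power2_eq_square)
    ultimately show ?thesis using e by simp
  next
    case False2: False
    define v where "v = - x"
    have v: "0 < v" "v < 1" using False False2 v_def by auto
    have a: "\<bar>x + 1\<bar> = 1 - v" "\<bar>x\<bar> = v" "x = - v" using v v_def by auto
    have "1 * 1 \<le> (1 + v) * (1 + v)" using v by (intro mult_mono) auto
    then have f1: "1 / (1 + v)\<^sup>2 \<le> 1" using v by (simp add: divide_simps power2_eq_square)
    have "(1 - v) / 2 \<le> (1 - v) / (2 - v)" using v by (intro divide_left_mono) auto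
    moreover have "v / 2 \<le> v / (1 + v)" using v by (intro divide_left_mono) auto
    ultimately have half: "1 / 2 \<le> (1 - v) / (2 - v) + v / (1 + v)" by (simp add: field_simps)
    have eq2: "(x + 1) / (1 + \<bar>x + 1\<bar>) - x / (1 + \<bar>x\<bar>) = (1 - v) / (2 - v) + v / (1 + v)"
      using a by (simp add: add_ac)
    have eq3: "1 / (1 + \<bar>x\<bar>)\<^sup>2 = 1 / (1 + v)\<^sup>2" using a by simp
    have "1 / (1 + \<bar>x\<bar>)\<^sup>2 \<le> 1" using f1 eq3 by simp
    also have "1 \<le> 2 * ((1 - v) / (2 - v) + v / (1 + v))"
    proof -
      define S where "S = (1 - v) / (2 - v) + v / (1 + v)"
      have "1 / 2 \<le> S" using half unfolding S_def .
      then have "1 \<le> 2 * S" by linarith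
      then show ?thesis unfolding S_def .
    qed
    also have "\<dots> = 2 * ((x + 1) / (1 + \<bar>x + 1\<bar>) - x / (1 + \<bar>x\<bar>))" using eq2 by simp
    finally show ?thesis .
  qed
qed

lemma lattice_sum: "(\<Sum>t<K. 1 / (1 + \<bar>real t + g\<bar>)\<^sup>2) \<le> 4"
proof -
  define \<phi> where "\<phi> = (\<lambda>n::nat. (real n + g) / (1 + \<bar>real n + g\<bar>))"
  have "(\<Sum>t<K. 1 / (1 + \<bar>real t + g\<bar>)\<^sup>2) \<le> (\<Sum>t<K. 2 * (\<phi> (Suc t) - \<phi> t))"
    by (rule sum_mono) (use lattice_pt[of "real _ + g"] in \<open>simp add: \<phi>_def add_ac\<close>)
  also have "\<dots> = 2 * (\<Sum>t<K. \<phi> (Suc t) - \<phi> t)" by (rule sum_distrib_left[symmetric])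
  also have "\<dots> = 2 * (\<phi> K - \<phi> 0)" by (simp only: sum_lessThan_telescope)
  also have "\<dots> \<le> 4"
  proof -
    have pos: "0 < 1 + \<bar>y\<bar>" for y :: real by (smt (verit) abs_ge_zero)
    have "\<bar>\<phi> n\<bar> \<le> 1" for n unfolding \<phi>_def using pos by (simp add: abs_div divide_le_eq_1)
    then show ?thesis by (smt (verit))
  qed
  finally show ?thesis .
qed


definition hfun :: "(real \<Rightarrow> real) \<Rightarrow> real \<Rightarrow> real" where
  "hfun chi y = Inf (insert 1 (range (\<lambda>n. real (n + 1) * Bd chi n / y ^ n)))"

lemma hset_bdd: assumes "Cc_inf_01 chi" "0 < y"
  shows "bdd_below (insert 1 (range (\<lambda>n. real (n + 1) * Bd chi n / y ^ n)))"
  using Bd_nonneg[OF assms(1)] assms(2) by (intro bdd_belowI[of _ 0]) auto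

lemma hfun_nonneg: assumes "Cc_inf_01 chi" "0 < y" shows "0 \<le> hfun chi y"
  unfolding hfun_def using Bd_nonneg[OF assms(1)] assms(2) by (intro cInf_greatest) auto

lemma hfun_le1: assumes "Cc_inf_01 chi" "0 < y" shows "hfun chi y \<le> 1"
  unfolding hfun_def using hset_bdd[OF assms] by (intro cInf_lower) auto

lemma hfun_le: assumes "Cc_inf_01 chi" "0 < y" shows "hfun chi y \<le> real (n + 1) * Bd chi n / y ^ n"
  unfolding hfun_def using hset_bdd[OF assms] by (intro cInf_lower) auto

lemma hfun_ge: assumes "v \<le> 1" "\<And>n. v \<le> real (n + 1) * Bd chi n / y ^ n" shows "v \<le> hfun chi y"
  unfolding hfun_def using assms by (intro cInf_greatest) auto

lemma hfun_antimono: assumes "Cc_inf_01 chi" "0 < y1" "y1 \<le> y2" shows "hfun chi y2 \<le> hfun chi y1"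
proof (rule hfun_ge)
  have y2: "0 < y2" using assms by simp
  show "hfun chi y2 \<le> 1" by (rule hfun_le1[OF assms(1) y2])
  fix n
  have "hfun chi y2 \<le> real (n + 1) * Bd chi n / y2 ^ n" by (rule hfun_le[OF assms(1) y2])
  also have "\<dots> \<le> real (n + 1) * Bd chi n / y1 ^ n"
    using assms Bd_nonneg[OF assms(1)]
    by (intro divide_left_mono mult_nonneg_nonneg power_mono mult_pos_pos) (auto simp: zero_less_power)
  finally show "hfun chi y2 \<le> real (n + 1) * Bd chi n / y1 ^ n" .
qed

lemma S_bound:
  assumes chi: "Cc_inf_01 chi" and range: "\<And>x. 0 \<le> chi x \<and> chi x \<le> 1"
    and K: "K \<ge> 1" and t: "\<bar>t\<bar> \<le> 1" and y: "y = real K * nd t" "0 < y"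
  shows "cmod (\<Sum>m<K. of_real (chi (real m / real K)) * exp (\<i> * of_real (2 * pi * t)) ^ m)
     \<le> real K * hfun chi y"
proof -
  define \<omega> where "\<omega> = exp (\<i> * of_real (2 * pi * t))"
  define S where "S = cmod (\<Sum>m<K. of_real (chi (real m / real K)) * \<omega> ^ m)"
  have w: "cmod \<omega> = 1" unfolding \<omega>_def by (simp add: norm_exp_i_times)
  have ndpos: "0 < nd t" using y K by (simp add: zero_less_mult_iff)
  have Kpos: "0 < real K" using K by simp
  have c: "nd t \<le> cmod (\<omega> - 1)" unfolding \<omega>_def by (rule exp_minus_one_lower[OF t])
  have S0: "0 \<le> S" unfolding S_def by simp
  have "S \<le> (\<Sum>m<K. cmod (of_real (chi (real m / real K)) * \<omega> ^ m))" unfolding S_def by (rule norm_sum)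
  also have "\<dots> \<le> (\<Sum>m<K. 1)"
    using range w by (intro sum_mono) (simp add: norm_mult norm_power)
  finally have S1: "S / real K \<le> 1" using Kpos by simp
  have Sn: "S / real K \<le> real (n + 1) * Bd chi n / y ^ n" for n
  proof -
    have "nd t ^ n * S \<le> cmod (\<omega> - 1) ^ n * S"
      using c ndpos S0 by (intro mult_right_mono power_mono) auto
    also have "\<dots> \<le> real (K + n) * ((1 / real K) ^ n * Bd chi n)"
      unfolding S_def using S_bound_raw[OF chi K w] .
    also have "\<dots> \<le> real K * real (n + 1) * ((1 / real K) ^ n * Bd chi n)"
    proof (rule mult_right_mono)
      have "1 * n \<le> K * n" by (rule mult_le_mono1[OF K])
      then have "K + n \<le> K * (n + 1)" by (simp add: algebra_simps)
      then have "real (K + n) \<le> real (K * (n + 1))" by (rule of_nat_mono)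
      then show "real (K + n) \<le> real K * real (n + 1)" by (simp only: of_nat_mult)
      show "0 \<le> (1 / real K) ^ n * Bd chi n" using Bd_nonneg[OF chi] by simp
    qed
    finally have "nd t ^ n * S \<le> real K * real (n + 1) * ((1 / real K) ^ n * Bd chi n)" .
    then have "(real K * nd t) ^ n * S \<le> real K ^ n * (real K * real (n + 1) * ((1 / real K) ^ n * Bd chi n))"
      by (simp add: power_mult_distrib mult.assoc mult_left_mono)
    also have "\<dots> = real K * (real (n + 1) * Bd chi n)"
      using Kpos by (simp add: power_one_over field_simps)
    finally have "y ^ n * S \<le> real K * (real (n + 1) * Bd chi n)" using y by simp
    moreover have yn: "0 < y ^ n" using y by simp
    ultimately have "S \<le> real K * (real (n + 1) * Bd chi n) / y ^ n"
      by (simp add: pos_le_divide_eq mult.commute)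
    then have "S / real K \<le> real K * (real (n + 1) * Bd chi n) / y ^ n / real K"
      using Kpos by (intro divide_right_mono) auto
    also have "\<dots> = real (n + 1) * Bd chi n / y ^ n" using Kpos by simp
    finally show ?thesis .
  qed
  have "S / real K \<le> hfun chi y" by (rule hfun_ge[OF S1 Sn])
  then show ?thesis unfolding S_def \<omega>_def using Kpos by (simp add: field_simps)
qed

definition Cq :: "(real \<Rightarrow> real) \<Rightarrow> real" where
  "Cq chi = 4 * sqrt (1 + 5 * Bd chi 4)"

lemma hfun_quartic: assumes chi: "Cc_inf_01 chi" and y: "0 < y"
  shows "hfun chi y \<le> (Cq chi)\<^sup>2 / (1 + y) ^ 4"
proof -
  have B: "0 \<le> Bd chi 4" by (rule Bd_nonneg[OF chi])
  have cq: "(Cq chi)\<^sup>2 = 16 * (1 + 5 * Bd chi 4)" unfolding Cq_def using B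
    by (simp add: power_mult_distrib)
  show ?thesis
  proof (cases "y \<le> 1")
    case True
    have "(1 + y) ^ 4 \<le> 2 ^ 4" using True y by (intro power_mono) auto
    then have "1 \<le> 16 / (1 + y) ^ 4" using y by (simp add: divide_simps)
    also have "\<dots> \<le> 16 * (1 + 5 * Bd chi 4) / (1 + y) ^ 4" using B y
      by (intro divide_right_mono) auto
    finally show ?thesis using hfun_le1[OF chi y] cq by simp
  next
    case False
    have "hfun chi y \<le> real (4 + 1) * Bd chi 4 / y ^ 4" by (rule hfun_le[OF chi y])
    also have "\<dots> = 5 * Bd chi 4 / y ^ 4" by simp
    also have "\<dots> \<le> 16 * (5 * Bd chi 4) / (1 + y) ^ 4"
    proof -
      have "(1 + y) ^ 4 \<le> (2 * y) ^ 4" using False y by (intro power_mono) auto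
      then have "(1 + y) ^ 4 \<le> 16 * y ^ 4" by (simp add: power_mult_distrib)
      then show ?thesis using B y by (simp add: divide_simps mult_left_mono)
        (metis mult.commute mult_left_mono mult.assoc)
    qed
    also have "\<dots> \<le> 16 * (1 + 5 * Bd chi 4) / (1 + y) ^ 4" using B y
      by (intro divide_right_mono) auto
    finally show ?thesis using cq by simp
  qed
qed

lemma sqrt_hfun_quad: assumes chi: "Cc_inf_01 chi" and y: "0 < y"
  shows "sqrt (hfun chi y) \<le> Cq chi / (1 + y)\<^sup>2"
proof -
  have "sqrt (hfun chi y) \<le> sqrt ((Cq chi / (1 + y)\<^sup>2)\<^sup>2)"
    using hfun_quartic[OF chi y] by (intro real_sqrt_le_mono) (simp add: power_divide power_mult[symmetric])
  also have "\<dots> = Cq chi / (1 + y)\<^sup>2" unfolding Cq_def using y Bd_nonneg[OF chi] by simp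
  finally show ?thesis .
qed

definition gfun :: "(real \<Rightarrow> real) \<Rightarrow> real \<Rightarrow> real" where
  "gfun chi x = 12 * Cq chi * sqrt (hfun chi (x / 2))"

lemma Cq_pos: "Cc_inf_01 chi \<Longrightarrow> 0 < Cq chi"
  unfolding Cq_def using Bd_nonneg[of chi 4] by simp

lemma gfun_nonneg: "Cc_inf_01 chi \<Longrightarrow> 0 < x \<Longrightarrow> 0 \<le> gfun chi x"
  unfolding gfun_def using Cq_pos[of chi] hfun_nonneg[of chi "x/2"] by simp

lemma gfun_poly:
  assumes chi: "Cc_inf_01 chi"
  shows "\<exists>C>0. \<forall>x>0. gfun chi x \<le> C * x powr (- real n)"
proof -
  define C0 where "C0 = 12 * Cq chi * sqrt (real (2 * n + 1) * Bd chi (2 * n)) * 2 ^ n"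
  have C0: "0 \<le> C0" unfolding C0_def using Cq_pos[OF chi] Bd_nonneg[OF chi] by simp
  have "gfun chi x \<le> (C0 + 1) * x powr (- real n)" if x: "0 < x" for x
  proof -
    have x2: "0 < x / 2" using x by simp
    have "hfun chi (x / 2) \<le> real (2 * n + 1) * Bd chi (2 * n) / (x / 2) ^ (2 * n)"
      by (rule hfun_le[OF chi x2])
    then have "sqrt (hfun chi (x / 2)) \<le> sqrt (real (2 * n + 1) * Bd chi (2 * n) / (x / 2) ^ (2 * n))"
      by (rule real_sqrt_le_mono)
    also have "\<dots> = sqrt (real (2 * n + 1) * Bd chi (2 * n)) / (x / 2) ^ n"
    proof -
      have sq: "(x / 2) ^ (2 * n) = ((x / 2) ^ n)\<^sup>2" by (metis power_mult mult.commute)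
      show ?thesis unfolding sq real_sqrt_divide real_sqrt_abs using x by simp
    qed
    finally have "12 * Cq chi * sqrt (hfun chi (x / 2)) \<le> 12 * Cq chi * (sqrt (real (2 * n + 1) * Bd chi (2 * n)) / (x / 2) ^ n)"
      by (rule mult_left_mono) (use Cq_pos[OF chi] in simp)
    then have "gfun chi x \<le> 12 * Cq chi * (sqrt (real (2 * n + 1) * Bd chi (2 * n)) / (x / 2) ^ n)"
      unfolding gfun_def .
    also have "\<dots> = C0 * x powr (- real n)"
      unfolding C0_def using x by (simp add: powr_minus powr_realpow power_divide field_simps)
    also have "\<dots> \<le> (C0 + 1) * x powr (- real n)" by (simp add: mult_right_mono)
    finally show ?thesis .
  qed
  moreover have "0 < C0 + 1" using C0 by simp
  ultimately show ?thesis by blast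
qed


lemma suc_le_two_pow: "real (n + 1) \<le> 2 ^ n"
proof (induction n)
  case 0 then show ?case by simp
next
  case (Suc n)
  have "1 \<le> (2::real) ^ n" by simp
  then show ?case using Suc by simp
qed

lemma fact_powr_le: assumes "0 \<le> s" shows "(fact n :: real) powr s \<le> (real n powr s) ^ n"
proof (cases "n = 0")
  case True then show ?thesis by simp
next
  case False
  then have np: "0 < real n" by simp
  have "(fact n :: real) powr s \<le> (real n ^ n) powr s"
    using fact_le_power[of n] assms by (intro powr_mono2) auto
  also have "(real n ^ n) powr s = (real n powr s) ^ n"
    using np by (simp add: powr_realpow[symmetric] powr_powr powr_power mult.commute)
  finally show ?thesis .
qed

lemma exp_half_sqrt: "sqrt (exp (- t)) = exp (- t / 2)"
proof -
  have "exp (- t) = (exp (- t / 2))\<^sup>2" by (simp add: power2_eq_square exp_add[symmetric])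
  then show ?thesis by simp
qed

lemma gfun_gevrey:
  assumes chi: "Cc_inf_01 chi" and s: "s > 1" and gev: "gevrey_c01 s chi"
  shows "\<exists>C>0. \<exists>c>0. \<forall>x>0. gfun chi x \<le> C * exp (- c * x powr (1 / s))"
proof -
  obtain C where C: "\<forall>\<alpha>::nat. \<forall>x\<in>{0..1::real}. \<bar>(deriv ^^ \<alpha>) chi x\<bar> \<le> C ^ (\<alpha> + 1) * (fact \<alpha>) powr s"
    using gev unfolding gevrey_c01_def by (meson compact_Icc)
  define C1 where "C1 = max 1 \<bar>C\<bar>"
  have C1: "1 \<le> C1" unfolding C1_def by simp
  have sm: "smooth_real chi" and sub: "fsupp chi \<subseteq> {0<..<1}" using chi unfolding Cc_inf_01_def by auto
  have Bd_gev: "Bd chi n \<le> C1 ^ (n + 1) * (real n powr s) ^ n" for n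
  proof -
    have "Bd chi n \<le> C1 ^ (n + 1) * (fact n) powr s"
    proof (rule Bd_le)
      fix x
      show "\<bar>(deriv ^^ n) chi x\<bar> \<le> C1 ^ (n + 1) * (fact n) powr s"
      proof (cases "x \<in> {0..1}")
        case True
        have "\<bar>(deriv ^^ n) chi x\<bar> \<le> C ^ (n + 1) * (fact n) powr s" using C True by blast
        also have "\<dots> \<le> C1 ^ (n + 1) * (fact n) powr s"
        proof (rule mult_right_mono)
          have "C ^ (n + 1) \<le> \<bar>C\<bar> ^ (n + 1)" by (metis abs_ge_self power_abs)
          also have "\<dots> \<le> C1 ^ (n + 1)" unfolding C1_def by (intro power_mono) auto
          finally show "C ^ (n + 1) \<le> C1 ^ (n + 1)" .
        qed simp
        finally show ?thesis .
      next
        case False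
        then have "x \<notin> fsupp chi" using sub by auto
        then show ?thesis using smooth_deriv_zero_out[OF sm] C1 by simp
      qed
    qed
    also have "\<dots> \<le> C1 ^ (n + 1) * (real n powr s) ^ n"
      using fact_powr_le[of s n] s C1 by (intro mult_left_mono) auto
    finally show ?thesis .
  qed
  define E where "E = 2 * exp 1 * C1"
  have E: "0 < E" unfolding E_def using C1 by simp
  have hb: "hfun chi y \<le> C1 * exp 1 * exp (- ((y / E) powr (1 / s)))" if y: "0 < y" for y
  proof -
    define t where "t = (y / E) powr (1 / s)"
    define n where "n = nat \<lfloor>t\<rfloor>"
    have t0: "0 \<le> t" unfolding t_def by simp
    have nt: "real n \<le> t" "t < real n + 1" unfolding n_def using t0 by linarith+
    have ns: "real n powr s \<le> y / E"
    proof -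
      have "real n powr s \<le> t powr s" using nt s by (intro powr_mono2) auto
      also have "\<dots> = y / E" unfolding t_def using s y E by (simp add: powr_powr)
      finally show ?thesis .
    qed
    define b where "b = 2 * C1 * real n powr s / y"
    have b0: "0 \<le> b" unfolding b_def using C1 y by simp
    have b1: "b \<le> exp (- 1)"
    proof -
      have "b \<le> 2 * C1 * (y / E) / y" unfolding b_def using ns C1 y
        by (intro divide_right_mono mult_left_mono) auto
      also have "\<dots> = exp (- 1)" unfolding E_def using y C1 by (simp add: exp_minus field_simps)
      finally show ?thesis .
    qed
    have "hfun chi y \<le> real (n + 1) * Bd chi n / y ^ n" by (rule hfun_le[OF chi y])
    also have "\<dots> \<le> 2 ^ n * (C1 ^ (n + 1) * (real n powr s) ^ n) / y ^ n"
      using suc_le_two_pow[of n] Bd_gev[of n] Bd_nonneg[OF chi] y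
      by (intro divide_right_mono mult_mono) auto
    also have "\<dots> = C1 * b ^ n" unfolding b_def using y by (simp add: power_mult_distrib power_divide)
    also have "\<dots> \<le> C1 * exp (- 1) ^ n" using b0 b1 C1 by (intro mult_left_mono power_mono) auto
    also have "\<dots> = C1 * exp (- real n)" by (simp add: exp_of_nat_mult[symmetric])
    also have "\<dots> \<le> C1 * exp (1 - t)" using nt C1 by (intro mult_left_mono) auto
    also have "\<dots> = C1 * exp 1 * exp (- t)" by (simp add: exp_diff exp_minus field_simps)
    finally show ?thesis unfolding t_def .
  qed
  define c where "c = 1 / (2 * (2 * E) powr (1 / s))"
  define C2 where "C2 = 12 * Cq chi * sqrt (C1 * exp 1) + 1"
  have c: "0 < c" unfolding c_def using E by simp
  have C2: "0 < C2" unfolding C2_def using Cq_pos[OF chi] C1 by (intro add_nonneg_pos mult_nonneg_nonneg) auto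
  have "gfun chi x \<le> C2 * exp (- c * x powr (1 / s))" if x: "0 < x" for x
  proof -
    have x2: "0 < x / 2" using x by simp
    have "sqrt (hfun chi (x / 2)) \<le> sqrt (C1 * exp 1 * exp (- ((x / 2 / E) powr (1 / s))))"
      by (rule real_sqrt_le_mono[OF hb[OF x2]])
    also have "\<dots> = sqrt (C1 * exp 1) * exp (- ((x / 2 / E) powr (1 / s)) / 2)"
      using C1 by (simp add: real_sqrt_mult exp_half_sqrt del: real_sqrt_mult_self)
    also have "- ((x / 2 / E) powr (1 / s)) / 2 = - c * x powr (1 / s)"
      unfolding c_def by (simp add: powr_divide field_simps)
    finally have "sqrt (hfun chi (x / 2)) \<le> sqrt (C1 * exp 1) * exp (- c * x powr (1 / s))" .
    then have "gfun chi x \<le> 12 * Cq chi * (sqrt (C1 * exp 1) * exp (- c * x powr (1 / s)))"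
      unfolding gfun_def using Cq_pos[OF chi] by (intro mult_left_mono) auto
    also have "\<dots> \<le> C2 * exp (- c * x powr (1 / s))" unfolding C2_def by (simp add: algebra_simps)
    finally show ?thesis .
  qed
  then show ?thesis using c C2 by blast
qed


lemma adj_dims[simp]: "dim_row (mat_adjoint A) = dim_col A" "dim_col (mat_adjoint A) = dim_row A"
  unfolding mat_adjoint_def by simp_all

lemma adj_carrier: "A \<in> carrier_mat n m \<Longrightarrow> mat_adjoint A \<in> carrier_mat m n"
  unfolding carrier_mat_def by simp

lemma adj_index[simp]: fixes A :: "complex mat"
  shows "i < dim_col A \<Longrightarrow> j < dim_row A \<Longrightarrow> mat_adjoint A $$ (i,j) = cnj (A $$ (j,i))"
  unfolding mat_adjoint_def by (simp add: mat_of_rows_index)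

definition ee :: "real \<Rightarrow> complex" where "ee x = exp (2 * pi * \<i> * of_real x)"

lemma ee_add: "ee (x + y) = ee x * ee y"
  unfolding ee_def by (simp add: exp_add[symmetric] distrib_left)

lemma ee_int: "ee (of_int k) = 1"
proof -
  have "ee (of_int k) = exp ((2 * of_int k * pi) * \<i>)" unfolding ee_def by (simp add: algebra_simps)
  also have "\<dots> = 1" by (rule exp_integer_2pi) simp
  finally show ?thesis .
qed

lemma ee_nat: "ee (real k) = 1" using ee_int[of "int k"] by simp

lemma ee_0[simp]: "ee 0 = 1" unfolding ee_def by simp

lemma cnj_ee: "cnj (ee x) = ee (- x)"
  unfolding ee_def by (simp add: exp_cnj)

lemma norm_ee[simp]: "cmod (ee x) = 1"
proof -
  have "ee x = exp (\<i> * of_real (2 * pi * x))" unfolding ee_def by (simp add: algebra_simps)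
  then show ?thesis by (simp only: norm_exp_i_times)
qed

lemma ee_power: "ee x ^ m = ee (real m * x)"
  unfolding ee_def by (simp add: exp_of_nat_mult[symmetric] algebra_simps)

lemma ee_eq_1: "ee x = 1 \<Longrightarrow> \<exists>n::int. x = of_int n"
proof -
  assume "ee x = 1"
  then have "exp (2 * pi * \<i> * of_real x) = 1" unfolding ee_def .
  then obtain n :: int where "2 * pi * x = of_int (2 * n) * pi" by (auto simp: exp_eq_1)
  then have "x = of_int n" by simp
  then show ?thesis by blast
qed

lemma ee_sum:
  assumes M: "0 < M"
  shows "(\<Sum>a<M. ee (real a * of_int k / real M)) = (if int M dvd k then of_nat M else 0)"
proof -
  define \<omega> where "\<omega> = ee (of_int k / real M)"
  have e: "ee (real a * of_int k / real M) = \<omega> ^ a" for a unfolding \<omega>_def ee_power by simp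
  show ?thesis
  proof (cases "int M dvd k")
    case True
    then obtain q where q: "k = int M * q" by blast
    have "\<omega> = 1" unfolding \<omega>_def q using M ee_int[of q] by simp
    then show ?thesis using True e by simp
  next
    case False
    have n1: "\<omega> \<noteq> 1"
    proof
      assume "\<omega> = 1"
      then obtain n :: int where "of_int k / real M = of_int n" unfolding \<omega>_def using ee_eq_1 by blast
      then have "of_int k = real M * of_int n" using M by (simp add: field_simps)
      then have "k = int M * n" by (metis of_int_eq_iff of_int_mult of_int_of_nat_eq)
      then show False using False by simp
    qed
    have "\<omega> ^ M = 1" unfolding \<omega>_def ee_power using M ee_int[of k] by simp
    then have "(\<Sum>a<M. \<omega> ^ a) = 0" using n1 by (simp add: sum_gp_strict)
    then show ?thesis using False e by simp
  qed
qed

lemma int_dvd_diff_iff: assumes "j < N" "k < N" shows "int N dvd (int j - int k) \<longleftrightarrow> j = k"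
proof
  assume d: "int N dvd (int j - int k)"
  show "j = k"
  proof (rule ccontr)
    assume "j \<noteq> k"
    then have "int j - int k \<noteq> 0" by simp
    from dvd_imp_le_int[OF this d] have "int N \<le> \<bar>int j - int k\<bar>" by simp
    then show False using assms by linarith
  qed
qed simp

lemma fourier_carrier: "fourier N \<in> carrier_mat N N"
  unfolding fourier_def by simp

lemma fourier_dims[simp]: "dim_row (fourier N) = N" "dim_col (fourier N) = N"
  unfolding fourier_def by simp_all

lemma fourier_index: "j < N \<Longrightarrow> m < N \<Longrightarrow>
  fourier N $$ (j,m) = ee (- (real j * real m / real N)) / of_real (sqrt (real N))"
  unfolding fourier_def ee_def by (simp add: field_simps)

lemma sqrtN_sq: "of_real (sqrt (real N)) * of_real (sqrt (real N)) = (of_nat N :: complex)"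
  by (metis of_real_mult of_real_of_nat_eq of_nat_0_le_iff real_sqrt_mult_self abs_of_nonneg)

lemma fourier_adj_mult:
  assumes N: "0 < N"
  shows "mat_adjoint (fourier N) * fourier N = 1\<^sub>m N"
proof (rule eq_matI)
  fix j k assume j: "j < dim_row (1\<^sub>m N :: complex mat)" and k: "k < dim_col (1\<^sub>m N :: complex mat)"
  then have j: "j < N" and k: "k < N" by auto
  have "(mat_adjoint (fourier N) * fourier N) $$ (j, k) =
      (\<Sum>m\<in>{0..<N}. cnj (fourier N $$ (m, j)) * fourier N $$ (m, k))"
    using j k by (simp add: scalar_prod_def)
  also have "\<dots> = (\<Sum>m<N. ee (real m * of_int (int j - int k) / real N)) / of_nat N"
  proof -
    have "cnj (fourier N $$ (m, j)) * fourier N $$ (m, k) = ee (real m * of_int (int j - int k) / real N) / of_nat N"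
      if m: "m < N" for m
    proof -
      have "cnj (fourier N $$ (m, j)) * fourier N $$ (m, k) =
          (ee (real m * real j / real N) * ee (- (real m * real k / real N))) / (of_real (sqrt (real N)) * of_real (sqrt (real N)))"
        using m j k by (simp add: fourier_index cnj_ee)
      also have "\<dots> = ee (real m * of_int (int j - int k) / real N) / of_nat N"
        unfolding sqrtN_sq ee_add[symmetric] by (simp add: algebra_simps diff_divide_distrib)
      finally show ?thesis .
    qed
    then show ?thesis by (simp add: sum_divide_distrib atLeast0LessThan)
  qed
  also have "\<dots> = 1\<^sub>m N $$ (j, k)" using ee_sum[OF N, of "int j - int k"] int_dvd_diff_iff[OF j k] j k N by (simp del: of_int_diff)
  finally show "(mat_adjoint (fourier N) * fourier N) $$ (j, k) = 1\<^sub>m N $$ (j, k)" .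
qed auto

lemma fourier_mult_adj:
  assumes N: "0 < N"
  shows "fourier N * mat_adjoint (fourier N) = 1\<^sub>m N"
proof (rule eq_matI)
  fix j k assume j: "j < dim_row (1\<^sub>m N :: complex mat)" and k: "k < dim_col (1\<^sub>m N :: complex mat)"
  then have j: "j < N" and k: "k < N" by auto
  have "(fourier N * mat_adjoint (fourier N)) $$ (j, k) =
      (\<Sum>m\<in>{0..<N}. fourier N $$ (j, m) * cnj (fourier N $$ (k, m)))"
    using j k by (simp add: scalar_prod_def)
  also have "\<dots> = (\<Sum>m<N. ee (real m * of_int (int k - int j) / real N)) / of_nat N"
  proof -
    have "fourier N $$ (j, m) * cnj (fourier N $$ (k, m)) = ee (real m * of_int (int k - int j) / real N) / of_nat N"
      if m: "m < N" for m
    proof -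
      have "fourier N $$ (j, m) * cnj (fourier N $$ (k, m)) =
          (ee (- (real j * real m / real N)) * ee (real k * real m / real N)) / (of_real (sqrt (real N)) * of_real (sqrt (real N)))"
        using m j k by (simp add: fourier_index cnj_ee)
      also have "\<dots> = ee (real m * of_int (int k - int j) / real N) / of_nat N"
        unfolding sqrtN_sq ee_add[symmetric] by (simp add: algebra_simps diff_divide_distrib)
      finally show ?thesis .
    qed
    then show ?thesis by (simp add: sum_divide_distrib atLeast0LessThan)
  qed
  also have "\<dots> = 1\<^sub>m N $$ (j, k)" using ee_sum[OF N, of "int k - int j"] int_dvd_diff_iff[OF k j] j k N by (auto simp del: of_int_diff)
  finally show "(fourier N * mat_adjoint (fourier N)) $$ (j, k) = 1\<^sub>m N $$ (j, k)" .
qed auto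


definition sqn :: "complex vec \<Rightarrow> real" where "sqn u = (\<Sum>i<dim_vec u. (cmod (u $ i))\<^sup>2)"

lemma l2norm_sqn: "l2norm u = sqrt (sqn u)" unfolding l2norm_def sqn_def ..

lemma sqn_nonneg: "0 \<le> sqn u" unfolding sqn_def by (intro sum_nonneg) simp

lemma l2norm_nonneg: "0 \<le> l2norm u" unfolding l2norm_sqn using sqn_nonneg by simp

lemma l2norm_le_from_sqn: assumes "sqn v \<le> c\<^sup>2 * sqn u" "0 \<le> c" shows "l2norm v \<le> c * l2norm u"
proof -
  have "l2norm v \<le> sqrt (c\<^sup>2 * sqn u)" unfolding l2norm_sqn using assms by (intro real_sqrt_le_mono)
  also have "\<dots> = c * l2norm u" unfolding l2norm_sqn using assms by (simp add: real_sqrt_mult)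
  finally show ?thesis .
qed

lemma sqn_complex: "of_real (sqn u) = (\<Sum>i<dim_vec u. u$i * cnj (u$i))"
  unfolding sqn_def of_real_sum by (intro sum.cong refl) (rule complex_norm_square)

lemma quad_form:
  assumes A: "A \<in> carrier_mat N N" and v: "v \<in> carrier_vec N"
  shows "of_real (sqn (A *\<^sub>v v)) = (\<Sum>j<N. \<Sum>k<N. v$j * cnj (v$k) * (mat_adjoint A * A) $$ (k,j))"
proof -
  have "of_real (sqn (A *\<^sub>v v)) = (\<Sum>i<N. (A *\<^sub>v v)$i * cnj ((A *\<^sub>v v)$i))" using A by (simp add: sqn_complex)
  also have "\<dots> = (\<Sum>i<N. (\<Sum>j<N. A$$(i,j) * v$j) * (\<Sum>k<N. cnj (A$$(i,k)) * cnj (v$k)))"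
    using A v by (intro sum.cong) (auto simp: scalar_prod_def atLeast0LessThan)
  also have "\<dots> = (\<Sum>i<N. \<Sum>j<N. \<Sum>k<N. A$$(i,j) * v$j * (cnj (A$$(i,k)) * cnj (v$k)))"
    by (simp add: sum_product)
  also have "\<dots> = (\<Sum>j<N. \<Sum>i<N. \<Sum>k<N. A$$(i,j) * v$j * (cnj (A$$(i,k)) * cnj (v$k)))"
    by (rule sum.swap)
  also have "\<dots> = (\<Sum>j<N. \<Sum>k<N. \<Sum>i<N. A$$(i,j) * v$j * (cnj (A$$(i,k)) * cnj (v$k)))"
    by (rule sum.cong[OF refl], rule sum.swap)
  also have "\<dots> = (\<Sum>j<N. \<Sum>k<N. v$j * cnj (v$k) * (\<Sum>i<N. cnj (A$$(i,k)) * A$$(i,j)))"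
    by (simp add: sum_distrib_left algebra_simps)
  also have "\<dots> = (\<Sum>j<N. \<Sum>k<N. v$j * cnj (v$k) * (mat_adjoint A * A) $$ (k,j))"
    using A by (intro sum.cong refl) (simp add: scalar_prod_def atLeast0LessThan)
  finally show ?thesis .
qed

lemma unitary_sqn:
  assumes A: "A \<in> carrier_mat N N" and U: "mat_adjoint A * A = 1\<^sub>m N" and v: "v \<in> carrier_vec N"
  shows "sqn (A *\<^sub>v v) = sqn v"
proof -
  have "(of_real (sqn (A *\<^sub>v v)) :: complex) = (\<Sum>j<N. \<Sum>k<N. v$j * cnj (v$k) * (if k = j then 1 else 0))"
    unfolding quad_form[OF A v] U by (intro sum.cong refl) simp
  also have "\<dots> = (\<Sum>j<N. v$j * cnj (v$j))" by (simp add: if_distrib cong: if_cong)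
  also have "\<dots> = of_real (sqn v)" using v by (simp add: sqn_complex)
  finally show ?thesis by (simp only: of_real_eq_iff)
qed

lemma unitary_l2norm:
  assumes "A \<in> carrier_mat N N" "mat_adjoint A * A = 1\<^sub>m N" "v \<in> carrier_vec N"
  shows "l2norm (A *\<^sub>v v) = l2norm v"
  unfolding l2norm_sqn using unitary_sqn[OF assms] by simp

lemma adj_adj: fixes A :: "complex mat" shows "mat_adjoint (mat_adjoint A) = A"
  by (rule eq_matI) auto

lemma l2norm_L2: "l2norm u = L2_set (\<lambda>i. cmod (u$i)) {..<dim_vec u}"
  unfolding l2norm_def L2_set_def ..

lemma l2norm_triangle:
  assumes "x \<in> carrier_vec N" "y \<in> carrier_vec N"
  shows "l2norm (x + y) \<le> l2norm x + l2norm y"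
proof -
  have "l2norm (x + y) = L2_set (\<lambda>i. cmod ((x + y)$i)) {..<N}" using assms by (simp add: l2norm_L2)
  also have "\<dots> \<le> L2_set (\<lambda>i. cmod (x$i) + cmod (y$i)) {..<N}"
    using assms by (intro L2_set_mono) (auto simp: norm_triangle_ineq)
  also have "\<dots> \<le> L2_set (\<lambda>i. cmod (x$i)) {..<N} + L2_set (\<lambda>i. cmod (y$i)) {..<N}"
    by (rule L2_set_triangle_ineq)
  also have "\<dots> = l2norm x + l2norm y" using assms by (simp add: l2norm_L2)
  finally show ?thesis .
qed

lemma l2norm_smult: "l2norm (k \<cdot>\<^sub>v x) = cmod k * l2norm x"
proof -
  have "l2norm (k \<cdot>\<^sub>v x) = L2_set (\<lambda>i. cmod k * cmod (x$i)) {..<dim_vec x}"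
    unfolding l2norm_L2 by (intro L2_set_cong) (auto simp: norm_mult)
  also have "\<dots> = cmod k * l2norm x" unfolding l2norm_L2 by (simp add: L2_set_right_distrib)
  finally show ?thesis .
qed

section \<open>Operator bounds\<close>

definition opb :: "nat \<Rightarrow> complex mat \<Rightarrow> real \<Rightarrow> bool" where
  "opb N A c \<longleftrightarrow> (\<forall>u\<in>carrier_vec N. l2norm (A *\<^sub>v u) \<le> c * l2norm u)"

lemma opb_op_norm: assumes "opb N A c" "0 \<le> c" shows "op_norm N A \<le> c"
  unfolding op_norm_def
proof (rule cSup_least)
  have "l2norm (0\<^sub>v N :: complex vec) \<le> 1" by (simp add: l2norm_def)
  then have "l2norm (A *\<^sub>v 0\<^sub>v N) \<in> {l2norm (A *\<^sub>v u) |u. u \<in> carrier_vec N \<and> l2norm u \<le> 1}"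
    by (intro CollectI exI[of _ "0\<^sub>v N"]) simp
  then show "{l2norm (A *\<^sub>v u) |u. u \<in> carrier_vec N \<and> l2norm u \<le> 1} \<noteq> {}" by auto
  fix x assume "x \<in> {l2norm (A *\<^sub>v u) |u. u \<in> carrier_vec N \<and> l2norm u \<le> 1}"
  then obtain u where u: "u \<in> carrier_vec N" "l2norm u \<le> 1" "x = l2norm (A *\<^sub>v u)" by blast
  have "x \<le> c * l2norm u" using assms(1) u unfolding opb_def by blast
  also have "\<dots> \<le> c * 1" using u assms(2) by (intro mult_left_mono) auto
  finally show "x \<le> c" by simp
qed

lemma opb_from_sqn:
  assumes "\<And>u. u \<in> carrier_vec N \<Longrightarrow> sqn (A *\<^sub>v u) \<le> c\<^sup>2 * sqn u" "0 \<le> c"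
  shows "opb N A c"
  unfolding opb_def using assms l2norm_le_from_sqn by blast

lemma opb_mono: "opb N A c \<Longrightarrow> c \<le> c' \<Longrightarrow> opb N A c'"
  unfolding opb_def by (meson l2norm_nonneg mult_right_mono order_trans)

lemma opb_mult:
  assumes A: "A \<in> carrier_mat N N" and B: "B \<in> carrier_mat N N"
    and "opb N A a" "opb N B b" "0 \<le> a"
  shows "opb N (A * B) (a * b)"
  unfolding opb_def
proof
  fix u :: "complex vec" assume u: "u \<in> carrier_vec N"
  have "l2norm ((A * B) *\<^sub>v u) = l2norm (A *\<^sub>v (B *\<^sub>v u))" using A B u by simp
  also have "\<dots> \<le> a * l2norm (B *\<^sub>v u)" using assms(3) B u unfolding opb_def by simp
  also have "\<dots> \<le> a * (b * l2norm u)" using assms(4,5) u unfolding opb_def by (simp add: mult_left_mono)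
  finally show "l2norm ((A * B) *\<^sub>v u) \<le> a * b * l2norm u" by (simp add: mult.assoc)
qed

lemma opb_add:
  assumes A: "A \<in> carrier_mat N N" and B: "B \<in> carrier_mat N N"
    and "opb N A a" "opb N B b"
  shows "opb N (A + B) (a + b)"
  unfolding opb_def
proof
  fix u :: "complex vec" assume u: "u \<in> carrier_vec N"
  have "l2norm ((A + B) *\<^sub>v u) = l2norm (A *\<^sub>v u + B *\<^sub>v u)" using A B u by (simp add: add_mult_distrib_mat_vec)
  also have "\<dots> \<le> l2norm (A *\<^sub>v u) + l2norm (B *\<^sub>v u)" using A B u by (intro l2norm_triangle[of _ N]) auto
  also have "\<dots> \<le> a * l2norm u + b * l2norm u" using assms(3,4) u unfolding opb_def by (simp add: add_mono)
  finally show "l2norm ((A + B) *\<^sub>v u) \<le> (a + b) * l2norm u" by (simp add: algebra_simps)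
qed

lemma smult_mat_vec: assumes "A \<in> carrier_mat N N" "u \<in> carrier_vec N"
  shows "(k \<cdot>\<^sub>m A) *\<^sub>v u = k \<cdot>\<^sub>v (A *\<^sub>v u)"
  using assms by (intro eq_vecI) (auto simp: scalar_prod_def sum_distrib_left algebra_simps)

lemma opb_smult:
  assumes A: "A \<in> carrier_mat N N" and "opb N A a"
  shows "opb N (k \<cdot>\<^sub>m A) (cmod k * a)"
  unfolding opb_def
proof
  fix u :: "complex vec" assume u: "u \<in> carrier_vec N"
  have "l2norm ((k \<cdot>\<^sub>m A) *\<^sub>v u) = cmod k * l2norm (A *\<^sub>v u)" using A u by (simp add: smult_mat_vec l2norm_smult)
  also have "\<dots> \<le> cmod k * (a * l2norm u)" using assms(2) u unfolding opb_def by (simp add: mult_left_mono)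
  finally show "l2norm ((k \<cdot>\<^sub>m A) *\<^sub>v u) \<le> cmod k * a * l2norm u" by (simp add: mult.assoc)
qed

lemma opb_zero: "opb N (0\<^sub>m N N) 0"
  unfolding opb_def
proof
  fix u :: "complex vec" assume u: "u \<in> carrier_vec N"
  have "0\<^sub>m N N *\<^sub>v u = 0\<^sub>v N" using u by (intro eq_vecI) (auto simp: scalar_prod_def)
  then show "l2norm (0\<^sub>m N N *\<^sub>v u) \<le> 0 * l2norm u" by (simp add: l2norm_def)
qed

lemma opb_unitary_conj:
  assumes F: "F \<in> carrier_mat N N" and U1: "mat_adjoint F * F = 1\<^sub>m N" and U2: "F * mat_adjoint F = 1\<^sub>m N"
    and Q: "Q \<in> carrier_mat N N" and "opb N Q c"
  shows "opb N (mat_adjoint F * Q * F) c"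
  unfolding opb_def
proof
  fix u :: "complex vec" assume u: "u \<in> carrier_vec N"
  have Fa: "mat_adjoint F \<in> carrier_mat N N" using F by (rule adj_carrier)
  have "(mat_adjoint F * Q * F) *\<^sub>v u = (mat_adjoint F * Q) *\<^sub>v (F *\<^sub>v u)"
    by (rule assoc_mult_mat_vec[OF mult_carrier_mat[OF Fa Q] F u])
  also have "\<dots> = mat_adjoint F *\<^sub>v (Q *\<^sub>v (F *\<^sub>v u))"
    by (rule assoc_mult_mat_vec[OF Fa Q mult_mat_vec_carrier[OF F u]])
  finally have "(mat_adjoint F * Q * F) *\<^sub>v u = mat_adjoint F *\<^sub>v (Q *\<^sub>v (F *\<^sub>v u))" .
  then have "l2norm ((mat_adjoint F * Q * F) *\<^sub>v u) = l2norm (Q *\<^sub>v (F *\<^sub>v u))"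
    using unitary_l2norm[OF Fa _, of "Q *\<^sub>v (F *\<^sub>v u)"] U2 adj_adj[of F] F Q u by simp
  also have "\<dots> \<le> c * l2norm (F *\<^sub>v u)" using assms(5) F u unfolding opb_def by simp
  also have "l2norm (F *\<^sub>v u) = l2norm u" using unitary_l2norm[OF F U1 u] .
  finally show "l2norm ((mat_adjoint F * Q * F) *\<^sub>v u) \<le> c * l2norm u" .
qed

section \<open>Diagonal projections and Fourier multipliers\<close>

definition Pm :: "nat \<Rightarrow> nat set \<Rightarrow> complex mat" where
  "Pm N S = mat N N (\<lambda>(i,j). if i = j \<and> i \<in> S then 1 else 0)"

lemma Pm_carrier[simp]: "Pm N S \<in> carrier_mat N N" unfolding Pm_def by simp

lemma Pm_dims[simp]: "dim_row (Pm N S) = N" "dim_col (Pm N S) = N" unfolding Pm_def by simp_all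

lemma Pm_index: "i < N \<Longrightarrow> j < N \<Longrightarrow> Pm N S $$ (i,j) = (if i = j \<and> i \<in> S then 1 else 0)"
  unfolding Pm_def by simp

lemma Pm_mult_vec: assumes "u \<in> carrier_vec N" "i < N"
  shows "(Pm N S *\<^sub>v u) $ i = (if i \<in> S then u $ i else 0)"
proof -
  have "(Pm N S *\<^sub>v u) $ i = (\<Sum>j\<in>{0..<N}. (if i = j \<and> i \<in> S then 1 else 0) * u $ j)"
    using assms by (simp add: scalar_prod_def Pm_index)
  also have "\<dots> = (\<Sum>j\<in>{0..<N}. if j = i then (if i \<in> S then u $ i else 0) else 0)"
    by (intro sum.cong refl) auto
  also have "\<dots> = (if i \<in> S then u $ i else 0)" using assms by simp
  finally show ?thesis .
qed

lemma opb_Pm: "opb N (Pm N S) 1"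
proof (rule opb_from_sqn)
  fix u :: "complex vec" assume u: "u \<in> carrier_vec N"
  have "sqn (Pm N S *\<^sub>v u) = (\<Sum>i<N. (cmod (if i \<in> S then u $ i else 0))\<^sup>2)"
    unfolding sqn_def using u by (intro sum.cong) (auto simp del: index_mult_mat_vec simp: Pm_mult_vec)
  also have "\<dots> \<le> (\<Sum>i<N. (cmod (u $ i))\<^sup>2)" by (intro sum_mono) auto
  also have "\<dots> = 1\<^sup>2 * sqn u" using u by (simp add: sqn_def)
  finally show "sqn (Pm N S *\<^sub>v u) \<le> 1\<^sup>2 * sqn u" .
qed simp

lemma Pm_compl: "Pm N S + Pm N (- S) = 1\<^sub>m N"
  by (rule eq_matI) (auto simp: Pm_index)

lemma Pm_UNIV: "Pm N UNIV = 1\<^sub>m N"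
  by (rule eq_matI) (auto simp: Pm_index)

definition Xm :: "nat \<Rightarrow> nat set \<Rightarrow> complex mat" where
  "Xm N S = mat_adjoint (fourier N) * Pm N S * fourier N"

lemma Xm_carrier[simp]: "Xm N S \<in> carrier_mat N N"
  unfolding Xm_def using fourier_carrier[of N] adj_carrier[OF fourier_carrier[of N]]
  by (metis Pm_carrier mult_carrier_mat)

lemma Xm_dims[simp]: "dim_row (Xm N S) = N" "dim_col (Xm N S) = N"
  using Xm_carrier[of N S] unfolding carrier_mat_def by auto

lemma Xm_fm: "fourier_multiplier N (Xm N S)"
  unfolding fourier_multiplier_def Xm_def
  by (intro exI[of _ "Pm N S"]) (auto simp: diagonal_mat_def Pm_index)

lemma Xm_UNIV: assumes "0 < N" shows "Xm N UNIV = 1\<^sub>m N"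
  unfolding Xm_def Pm_UNIV using fourier_adj_mult[OF assms] adj_carrier[OF fourier_carrier[of N]]
  by simp

lemma one_minus_Xm: assumes N: "0 < N" shows "1\<^sub>m N - Xm N S = Xm N (- S)"
proof -
  have Fa: "mat_adjoint (fourier N) \<in> carrier_mat N N" by (rule adj_carrier[OF fourier_carrier])
  have F: "fourier N \<in> carrier_mat N N" by (rule fourier_carrier)
  have "1\<^sub>m N = mat_adjoint (fourier N) * (Pm N S + Pm N (- S)) * fourier N"
    unfolding Pm_compl using fourier_adj_mult[OF N] Fa by simp
  also have "\<dots> = Xm N S + Xm N (- S)" unfolding Xm_def
    using Fa F by (simp add: mult_add_distrib_mat[OF Fa Pm_carrier Pm_carrier]
        add_mult_distrib_mat[OF mult_carrier_mat[OF Fa Pm_carrier] mult_carrier_mat[OF Fa Pm_carrier] F])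
  finally have decomp: "1\<^sub>m N = Xm N S + Xm N (- S)" .
  show ?thesis
  proof (rule eq_matI)
    fix i j assume ij: "i < dim_row (Xm N (- S))" "j < dim_col (Xm N (- S))"
    then have ij': "i < N" "j < N" using Xm_carrier[of N "- S"] by auto
    have "1\<^sub>m N $$ (i, j) = (Xm N S + Xm N (- S)) $$ (i, j)" using decomp by simp
    then have "1\<^sub>m N $$ (i, j) = Xm N S $$ (i, j) + Xm N (- S) $$ (i, j)"
      using ij' Xm_carrier[of N "- S"] by simp
    then show "(1\<^sub>m N - Xm N S) $$ (i, j) = Xm N (- S) $$ (i, j)"
      using ij' Xm_carrier[of N S] by simp
  qed (use Xm_carrier[of N S] Xm_carrier[of N "- S"] in auto)
qed

lemma opb_Xm: assumes "0 < N" shows "opb N (Xm N S) 1"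
  unfolding Xm_def
  by (rule opb_unitary_conj[OF fourier_carrier fourier_adj_mult[OF assms] fourier_mult_adj[OF assms] Pm_carrier opb_Pm])


primrec Zs :: "nat \<Rightarrow> complex mat \<Rightarrow> (nat \<Rightarrow> complex mat) \<Rightarrow> complex \<Rightarrow> nat \<Rightarrow> complex mat" where
  "Zs N B X z 0 = 0\<^sub>m N N"
| "Zs N B X z (Suc k) = (1 / z) \<cdot>\<^sub>m ((1\<^sub>m N - X (Suc k)) * B * Zs N B X z k) - (1 / z) \<cdot>\<^sub>m (1\<^sub>m N - X (Suc k))"

primrec Rs :: "nat \<Rightarrow> complex mat \<Rightarrow> (nat \<Rightarrow> complex mat) \<Rightarrow> complex \<Rightarrow> nat \<Rightarrow> complex mat" where
  "Rs N B X z 0 = 0\<^sub>m N N"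
| "Rs N B X z (Suc k) = (1 / z) \<cdot>\<^sub>m ((1\<^sub>m N - X (Suc k)) * B * Rs N B X z k)
      + (1 / z) \<cdot>\<^sub>m ((1\<^sub>m N - X (Suc k)) * B * X k)"

lemma ZR_carrier:
  assumes B: "B \<in> carrier_mat N N" and X: "\<And>k. X k \<in> carrier_mat N N"
  shows "Zs N B X z k \<in> carrier_mat N N \<and> Rs N B X z k \<in> carrier_mat N N"
proof (induction k)
  case 0 then show ?case by simp
next
  case (Suc k)
  have Y: "1\<^sub>m N - X (Suc k) \<in> carrier_mat N N" by (rule minus_carrier_mat[OF X])
  show ?case using Suc Y B X by (auto intro!: minus_carrier_mat add_carrier_mat mult_carrier_mat smult_carrier_mat)
qed

lemma ZR_identity:
  assumes B: "B \<in> carrier_mat N N" and X: "\<And>k. X k \<in> carrier_mat N N"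
    and X0: "X 0 = 1\<^sub>m N" and z: "z \<noteq> 0"
  shows "1\<^sub>m N - X k = Zs N B X z k * (B - z \<cdot>\<^sub>m 1\<^sub>m N) + Rs N B X z k"
proof (induction k)
  case 0
  show ?case unfolding X0 by (rule eq_matI) auto
next
  case (Suc k)
  define Y where "Y = 1\<^sub>m N - X (Suc k)"
  define W where "W = B - z \<cdot>\<^sub>m 1\<^sub>m N"
  define Zk where "Zk = Zs N B X z k"
  define Rk where "Rk = Rs N B X z k"
  define P where "P = Y * B"
  define c where "c = 1 / z"
  have Yc: "Y \<in> carrier_mat N N" unfolding Y_def by (rule minus_carrier_mat[OF X])
  have Wc: "W \<in> carrier_mat N N" unfolding W_def by (rule minus_carrier_mat) simp
  have Zc: "Zk \<in> carrier_mat N N" and Rc: "Rk \<in> carrier_mat N N"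
    unfolding Zk_def Rk_def using ZR_carrier[OF B X] by auto
  have Pc: "P \<in> carrier_mat N N" unfolding P_def using Yc B by simp
  have Xk: "X k \<in> carrier_mat N N" by (rule X)
  have IH: "1\<^sub>m N - X k = Zk * W + Rk" unfolding Zk_def W_def Rk_def by (rule Suc.IH)
  have e1: "P * (Zk * W) + P * Rk = P * (1\<^sub>m N - X k)"
    unfolding IH using Pc Zc Wc Rc by (simp add: mult_add_distrib_mat[OF Pc mult_carrier_mat[OF Zc Wc] Rc])
  have e1': "P * (1\<^sub>m N - X k) = P - P * X k"
    using Pc Xk by (simp add: mult_minus_distrib_mat[OF Pc one_carrier_mat Xk])
  have e2: "Y * W = P - z \<cdot>\<^sub>m Y"
    unfolding W_def P_def using Yc B
    by (simp add: mult_minus_distrib_mat[OF Yc B smult_carrier_mat[OF one_carrier_mat]] mult_smult_distrib[OF Yc one_carrier_mat])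
  have e3: "(c \<cdot>\<^sub>m (P * Zk) - c \<cdot>\<^sub>m Y) * W = c \<cdot>\<^sub>m (P * (Zk * W)) - c \<cdot>\<^sub>m (Y * W)"
  proof -
    have "(c \<cdot>\<^sub>m (P * Zk) - c \<cdot>\<^sub>m Y) * W = (c \<cdot>\<^sub>m (P * Zk)) * W - (c \<cdot>\<^sub>m Y) * W"
      by (rule minus_mult_distrib_mat) (use Pc Zc Yc Wc in auto)
    also have "\<dots> = c \<cdot>\<^sub>m (P * Zk * W) - c \<cdot>\<^sub>m (Y * W)"
      using Pc Zc Yc Wc by (simp add: mult_smult_assoc_mat[of _ N N _ N])
    also have "P * Zk * W = P * (Zk * W)" using Pc Zc Wc by simp
    finally show ?thesis .
  qed
  have goal: "Y = (c \<cdot>\<^sub>m (P * Zk) - c \<cdot>\<^sub>m Y) * W + (c \<cdot>\<^sub>m (P * Rk) + c \<cdot>\<^sub>m (P * X k))"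
  proof (rule eq_matI)
    fix i j assume ij: "i < dim_row ((c \<cdot>\<^sub>m (P * Zk) - c \<cdot>\<^sub>m Y) * W + (c \<cdot>\<^sub>m (P * Rk) + c \<cdot>\<^sub>m (P * X k)))"
      "j < dim_col ((c \<cdot>\<^sub>m (P * Zk) - c \<cdot>\<^sub>m Y) * W + (c \<cdot>\<^sub>m (P * Rk) + c \<cdot>\<^sub>m (P * X k)))"
    then have i: "i < N" and j: "j < N" using Pc Rc Xk by auto
    have d: "dim_row P = N" "dim_col P = N" "dim_row Y = N" "dim_col Y = N" "dim_row Zk = N" "dim_col Zk = N"
      "dim_row W = N" "dim_col W = N" "dim_row Rk = N" "dim_col Rk = N" "dim_row (X k) = N" "dim_col (X k) = N"
      using Pc Yc Zc Wc Rc Xk by auto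
    have a1: "(P * (Zk * W)) $$ (i,j) + (P * Rk) $$ (i,j) = P $$ (i,j) - (P * X k) $$ (i,j)"
    proof -
      have "(P * (Zk * W) + P * Rk) $$ (i,j) = (P - P * X k) $$ (i,j)" using e1 e1' by simp
      then show ?thesis using i j d by simp
    qed
    have a2: "(Y * W) $$ (i,j) = P $$ (i,j) - z * Y $$ (i,j)"
    proof -
      have "(Y * W) $$ (i,j) = (P - z \<cdot>\<^sub>m Y) $$ (i,j)" using e2 by simp
      then show ?thesis using i j d by simp
    qed
    have "(((c \<cdot>\<^sub>m (P * Zk) - c \<cdot>\<^sub>m Y) * W + (c \<cdot>\<^sub>m (P * Rk) + c \<cdot>\<^sub>m (P * X k)))) $$ (i,j)
        = ((c \<cdot>\<^sub>m (P * (Zk * W)) - c \<cdot>\<^sub>m (Y * W)) + (c \<cdot>\<^sub>m (P * Rk) + c \<cdot>\<^sub>m (P * X k))) $$ (i,j)"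
      unfolding e3 ..
    also have "\<dots> = c * (P * (Zk * W)) $$ (i,j) - c * (Y * W) $$ (i,j) + (c * (P * Rk) $$ (i,j) + c * (P * X k) $$ (i,j))"
      using i j d by simp
    also have "\<dots> = c * ((P * (Zk * W)) $$ (i,j) + (P * Rk) $$ (i,j) + (P * X k) $$ (i,j) - (Y * W) $$ (i,j))"
      by (simp add: algebra_simps)
    also have "\<dots> = c * (z * Y $$ (i,j))" unfolding a1 a2 by simp
    also have "\<dots> = Y $$ (i,j)" unfolding c_def using z by simp
    finally show "Y $$ (i,j) = (((c \<cdot>\<^sub>m (P * Zk) - c \<cdot>\<^sub>m Y) * W + (c \<cdot>\<^sub>m (P * Rk) + c \<cdot>\<^sub>m (P * X k)))) $$ (i,j)" ..
  qed (use Pc Rc Xk Yc Wc Zc in auto)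
  show ?case
    unfolding Zs.simps Rs.simps using goal unfolding Y_def W_def Zk_def Rk_def P_def c_def .
qed

lemma Rs_bound:
  assumes B: "B \<in> carrier_mat N N" and X: "\<And>k. X k \<in> carrier_mat N N"
    and YB: "\<And>k. opb N ((1\<^sub>m N - X (Suc k)) * B) 1"
    and E: "\<And>k. opb N ((1\<^sub>m N - X (Suc k)) * B * X k) (eps (Suc k))"
    and z: "z \<noteq> 0"
  shows "opb N (Rs N B X z k) (\<Sum>j<k. (1 / cmod z) ^ (j + 1) * eps (k - j))"
proof (induction k)
  case 0 then show ?case by (simp add: opb_zero)
next
  case (Suc k)
  define Y where "Y = 1\<^sub>m N - X (Suc k)"
  have Yc: "Y \<in> carrier_mat N N" unfolding Y_def by (rule minus_carrier_mat[OF X])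
  have Rc: "Rs N B X z k \<in> carrier_mat N N" using ZR_carrier[OF B X] by auto
  define r where "r = (\<Sum>j<k. (1 / cmod z) ^ (j + 1) * eps (k - j))"
  have r0: "0 \<le> r \<or> True" by simp
  have o1: "opb N (Y * B * Rs N B X z k) (1 * r)"
    using opb_mult[OF mult_carrier_mat[OF Yc B] Rc, of 1 r] YB[of k] Suc.IH unfolding Y_def r_def by simp
  have o2: "opb N ((1 / z) \<cdot>\<^sub>m (Y * B * Rs N B X z k)) (cmod (1 / z) * (1 * r))"
    by (rule opb_smult[OF _ o1]) (use Yc B Rc in simp)
  have o3: "opb N ((1 / z) \<cdot>\<^sub>m (Y * B * X k)) (cmod (1 / z) * eps (Suc k))"
    by (rule opb_smult[OF mult_carrier_mat[OF mult_carrier_mat[OF Yc B] X[of k]] E[of k, folded Y_def]])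
  have o4: "opb N (Rs N B X z (Suc k)) (cmod (1 / z) * (1 * r) + cmod (1 / z) * eps (Suc k))"
    unfolding Rs.simps Y_def[symmetric]
    by (rule opb_add[OF _ _ o2 o3]) (use Yc B X[of k] Rc in \<open>simp add: mult_carrier_mat[OF mult_carrier_mat[OF Yc B] X[of k]]\<close>)+
  have "cmod (1 / z) * (1 * r) + cmod (1 / z) * eps (Suc k) = (\<Sum>j<Suc k. (1 / cmod z) ^ (j + 1) * eps (Suc k - j))"
  proof -
    have "(\<Sum>j<Suc k. (1 / cmod z) ^ (j + 1) * eps (Suc k - j))
        = (1 / cmod z) * eps (Suc k) + (\<Sum>j<k. (1 / cmod z) ^ (Suc j + 1) * eps (Suc k - Suc j))"
      by (subst sum.lessThan_Suc_shift) simp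
    also have "\<dots> = (1 / cmod z) * eps (Suc k) + (1 / cmod z) * r"
      unfolding r_def by (simp add: sum_distrib_left mult.assoc)
    finally show ?thesis by (simp add: norm_divide algebra_simps)
  qed
  then show ?case using o4 by simp
qed


lemma div_mod_iff: fixes K :: nat assumes "0 < K" "r < K"
  shows "(p = r + a * K) \<longleftrightarrow> (r = p mod K \<and> p div K = a)"
proof
  assume "p = r + a * K" then show "r = p mod K \<and> p div K = a" using assms by simp
next
  assume "r = p mod K \<and> p div K = a" then show "p = r + a * K" by (metis div_mult_mod_eq add.commute)
qed

lemma sum_split_blocks: fixes K M :: nat shows "(\<Sum>i<K * M. f i) = (\<Sum>a<M. \<Sum>r<K. f (a * K + r))"
proof -
  have "(\<Sum>i<K * M. f i) = (\<Sum>a<M. sum f {a * K..<a * K + K})"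
    using sum.nat_group[of f K M] by (simp add: mult.commute)
  also have "\<dots> = (\<Sum>a<M. \<Sum>r<K. f (a * K + r))"
  proof (rule sum.cong[OF refl])
    fix a
    have "sum f {a * K..<a * K + K} = sum f {0 + a * K..<K + a * K}" by (simp add: add.commute)
    also have "\<dots> = (\<Sum>r\<in>{0..<K}. f (r + a * K))" by (rule sum.shift_bounds_nat_ivl)
    finally show "sum f {a * K..<a * K + K} = (\<Sum>r<K. f (a * K + r))"
      by (simp add: atLeast0LessThan add.commute)
  qed
  finally show ?thesis .
qed

lemma block_div: fixes K :: nat assumes "r < K" shows "(b * K + r) div K = b" "(b * K + r) mod K = r"
  using assms by auto

lemma block_lt: fixes K M :: nat assumes "a < M" "r < K" shows "a * K + r < K * M"
proof -
  have "a * K + r < a * K + K" using assms by simp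
  also have "\<dots> = (a + 1) * K" by simp
  also have "\<dots> \<le> M * K" using assms by (intro mult_right_mono) auto
  finally show ?thesis by (simp add: mult.commute)
qed

lemma sum_block: fixes K M :: nat assumes "a < M"
  shows "(\<Sum>q<K * M. if q div K = a then g q else 0) = (\<Sum>r<K. g (a * K + r))"
proof -
  have "(\<Sum>q<K * M. if q div K = a then g q else 0) = (\<Sum>b<M. \<Sum>r<K. if (b * K + r) div K = a then g (b * K + r) else 0)"
    by (rule sum_split_blocks)
  also have "\<dots> = (\<Sum>b<M. if b = a then (\<Sum>r<K. g (b * K + r)) else 0)"
    by (intro sum.cong refl) auto
  also have "\<dots> = (\<Sum>r<K. g (a * K + r))" using assms by simp
  finally show ?thesis .
qed

lemma div_lt_M: fixes K M :: nat assumes "i < K * M" shows "i div K < M"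
  using assms by (metis div_less_iff_less_mult mult.commute neq0_conv mult_0 not_less_zero)

lemma Pi_carrier: "Pi_op K M a \<in> carrier_mat K (K * M)" unfolding Pi_op_def by simp
lemma Pi_adj_carrier: "mat_adjoint (Pi_op K M a) \<in> carrier_mat (K * M) K"
  by (rule adj_carrier[OF Pi_carrier])
lemma chi_carrier: "chi_op chi K \<in> carrier_mat K K" unfolding chi_op_def by simp
lemma Fa_carrier: "mat_adjoint (fourier N) \<in> carrier_mat N N" by (rule adj_carrier[OF fourier_carrier])

lemma Pi_index: "j < K \<Longrightarrow> m < K * M \<Longrightarrow> Pi_op K M a $$ (j, m) = (if m = j + a * K then 1 else 0)"
  unfolding Pi_op_def by simp

lemma chi_index: "i < K \<Longrightarrow> j < K \<Longrightarrow> chi_op chi K $$ (i, j) = (if i = j then complex_of_real (chi (real j / real K)) else 0)"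
  unfolding chi_op_def by simp

definition Cm :: "(real \<Rightarrow> real) \<Rightarrow> nat \<Rightarrow> complex mat" where
  "Cm chi K = chi_op chi K * fourier K * chi_op chi K"

lemma Cm_carrier: "Cm chi K \<in> carrier_mat K K"
  unfolding Cm_def using chi_carrier fourier_carrier by (metis mult_carrier_mat)

lemma Cm_index: assumes "p < K" "q < K"
  shows "Cm chi K $$ (p, q) = of_real (chi (real p / real K)) * fourier K $$ (p, q) * of_real (chi (real q / real K))"
proof -
  have a: "(chi_op chi K * fourier K) $$ (p, r) = of_real (chi (real p / real K)) * fourier K $$ (p, r)" if r: "r < K" for r
  proof -
    have "(chi_op chi K * fourier K) $$ (p, r) = (\<Sum>s\<in>{0..<K}. chi_op chi K $$ (p, s) * fourier K $$ (s, r))"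
      using assms r by (simp add: scalar_prod_def chi_op_def)
    also have "\<dots> = (\<Sum>s\<in>{0..<K}. if s = p then of_real (chi (real p / real K)) * fourier K $$ (p, r) else 0)"
      using assms by (intro sum.cong refl) (auto simp: chi_index)
    also have "\<dots> = of_real (chi (real p / real K)) * fourier K $$ (p, r)" using assms by simp
    finally show ?thesis .
  qed
  have "Cm chi K $$ (p, q) = (\<Sum>r\<in>{0..<K}. (chi_op chi K * fourier K) $$ (p, r) * chi_op chi K $$ (r, q))"
    unfolding Cm_def using assms by (simp add: scalar_prod_def chi_op_def)
  also have "\<dots> = (\<Sum>r\<in>{0..<K}. if r = q then of_real (chi (real p / real K)) * fourier K $$ (p, q) * of_real (chi (real q / real K)) else 0)"
    using assms by (intro sum.cong refl) (auto simp: chi_index a)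
  also have "\<dots> = of_real (chi (real p / real K)) * fourier K $$ (p, q) * of_real (chi (real q / real K))"
    using assms by simp
  finally show ?thesis .
qed

definition Ga :: "nat \<Rightarrow> nat \<Rightarrow> (real \<Rightarrow> real) \<Rightarrow> nat \<Rightarrow> complex mat" where
  "Ga K M chi a = mat_adjoint (Pi_op K M a) * Cm chi K * Pi_op K M a"

lemma Ga_index:
  assumes K: "0 < K" and p: "p < K * M" and j: "j < K * M"
  shows "Ga K M chi a $$ (p, j) = (if p div K = a \<and> j div K = a then Cm chi K $$ (p mod K, j mod K) else 0)"
proof -
  define C where "C = Cm chi K"
  have Cc: "C \<in> carrier_mat K K" unfolding C_def by (rule Cm_carrier)
  have l: "(mat_adjoint (Pi_op K M a) * C) $$ (p, q) = (if p div K = a then C $$ (p mod K, q) else 0)"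
    if q: "q < K" for q
  proof -
    have "(mat_adjoint (Pi_op K M a) * C) $$ (p, q) = (\<Sum>r\<in>{0..<K}. cnj (Pi_op K M a $$ (r, p)) * C $$ (r, q))"
      using p q Cc Pi_carrier[of K M a] by (simp add: scalar_prod_def)
    also have "\<dots> = (\<Sum>r\<in>{0..<K}. if r = p mod K then (if p div K = a then C $$ (r, q) else 0) else 0)"
      using p by (intro sum.cong refl) (auto simp: Pi_index div_mod_iff[OF K])
    also have "\<dots> = (if p div K = a then C $$ (p mod K, q) else 0)" using K by simp
    finally show ?thesis .
  qed
  have "Ga K M chi a $$ (p, j) = (\<Sum>q\<in>{0..<K}. (mat_adjoint (Pi_op K M a) * C) $$ (p, q) * Pi_op K M a $$ (q, j))"
    unfolding Ga_def C_def[symmetric] using p j Cc Pi_carrier[of K M a] by (simp add: scalar_prod_def)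
  also have "\<dots> = (\<Sum>q\<in>{0..<K}. if q = j mod K then (if p div K = a \<and> j div K = a then C $$ (p mod K, q) else 0) else 0)"
    using j by (intro sum.cong refl) (auto simp: Pi_index div_mod_iff[OF K] l)
  also have "\<dots> = (if p div K = a \<and> j div K = a then C $$ (p mod K, j mod K) else 0)" using K by simp
  finally show ?thesis unfolding C_def .
qed

lemma Ga_dims[simp]: "dim_row (Ga K M chi a) = K * M" "dim_col (Ga K M chi a) = K * M"
  unfolding Ga_def using Pi_adj_carrier[of K M a] Pi_carrier[of K M a] by auto

definition Tm :: "nat \<Rightarrow> nat \<Rightarrow> nat set \<Rightarrow> (real \<Rightarrow> real) \<Rightarrow> complex mat" where
  "Tm K M A chi = mat (K * M) (K * M) (\<lambda>(p, j). if p div K = j div K \<and> j div K \<in> A then Cm chi K $$ (p mod K, j mod K) else 0)"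

lemma Tm_carrier: "Tm K M A chi \<in> carrier_mat (K * M) (K * M)" unfolding Tm_def by simp

lemma baker_summand:
  "mat_adjoint (fourier (K * M)) * mat_adjoint (Pi_op K M a) * chi_op chi K * fourier K * chi_op chi K * Pi_op K M a
   = mat_adjoint (fourier (K * M)) * Ga K M chi a"
  unfolding Ga_def Cm_def
  using Fa_carrier[of "K * M"] Pi_adj_carrier[of K M a] chi_carrier[of chi K] fourier_carrier[of K] Pi_carrier[of K M a]
  by (simp add: assoc_mult_mat[of _ "K * M" "K * M" _ K] assoc_mult_mat[of _ "K * M" K _ K] assoc_mult_mat[of _ K K _ K]
      assoc_mult_mat[of _ K K _ "K * M"])

lemma baker_eq:
  assumes K: "0 < K" and A: "A \<subseteq> {0..<M}"
  shows "baker M A chi K = mat_adjoint (fourier (K * M)) * Tm K M A chi"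
proof (rule eq_matI)
  have fin: "finite A" using A finite_subset by blast
  fix i j assume "i < dim_row (mat_adjoint (fourier (K * M)) * Tm K M A chi)"
    "j < dim_col (mat_adjoint (fourier (K * M)) * Tm K M A chi)"
  then have i: "i < K * M" and j: "j < K * M" using Tm_carrier[of K M A chi] by auto
  have "baker M A chi K $$ (i, j) = (\<Sum>a\<in>A. (mat_adjoint (fourier (K * M)) * Ga K M chi a) $$ (i, j))"
    unfolding baker_def using i j by (simp add: baker_summand)
  also have "\<dots> = (\<Sum>a\<in>A. \<Sum>p\<in>{0..<K * M}. cnj (fourier (K * M) $$ (p, i)) * Ga K M chi a $$ (p, j))"
    using i j by (intro sum.cong refl) (simp add: scalar_prod_def)
  also have "\<dots> = (\<Sum>p\<in>{0..<K * M}. cnj (fourier (K * M) $$ (p, i)) * (\<Sum>a\<in>A. Ga K M chi a $$ (p, j)))"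
    by (subst sum.swap) (simp add: sum_distrib_left)
  also have "\<dots> = (\<Sum>p\<in>{0..<K * M}. cnj (fourier (K * M) $$ (p, i)) * Tm K M A chi $$ (p, j))"
  proof (rule sum.cong[OF refl])
    fix p assume p: "p \<in> {0..<K * M}"
    have "(\<Sum>a\<in>A. Ga K M chi a $$ (p, j)) = (\<Sum>a\<in>A. if a = p div K then (if j div K = p div K then Cm chi K $$ (p mod K, j mod K) else 0) else 0)"
      using p j by (intro sum.cong refl) (auto simp: Ga_index[OF K])
    also have "\<dots> = Tm K M A chi $$ (p, j)" using fin p j unfolding Tm_def by auto
    finally show "cnj (fourier (K * M) $$ (p, i)) * (\<Sum>a\<in>A. Ga K M chi a $$ (p, j)) = cnj (fourier (K * M) $$ (p, i)) * Tm K M A chi $$ (p, j)"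
      by simp
  qed
  also have "\<dots> = (mat_adjoint (fourier (K * M)) * Tm K M A chi) $$ (i, j)"
    using i j Tm_carrier[of K M A chi] by (simp add: scalar_prod_def)
  finally show "baker M A chi K $$ (i, j) = (mat_adjoint (fourier (K * M)) * Tm K M A chi) $$ (i, j)" .
next
  show "dim_row (baker M A chi K) = dim_row (mat_adjoint (fourier (K * M)) * Tm K M A chi)"
    unfolding baker_def by simp
  show "dim_col (baker M A chi K) = dim_col (mat_adjoint (fourier (K * M)) * Tm K M A chi)"
    unfolding baker_def using Tm_carrier[of K M A chi] by simp
qed

lemma Tm_mult_vec:
  assumes K: "0 < K" and u: "u \<in> carrier_vec (K * M)" and i: "i < K * M"
  shows "(Tm K M A chi *\<^sub>v u) $ i = (if i div K \<in> A then (\<Sum>r<K. Cm chi K $$ (i mod K, r) * u $ (i div K * K + r)) else 0)"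
proof -
  have "(Tm K M A chi *\<^sub>v u) $ i = (\<Sum>q<K * M. Tm K M A chi $$ (i, q) * u $ q)"
    using u i Tm_carrier[of K M A chi] by (simp add: scalar_prod_def atLeast0LessThan)
  also have "\<dots> = (\<Sum>q<K * M. if q div K = i div K then (if i div K \<in> A then Cm chi K $$ (i mod K, q mod K) * u $ q else 0) else 0)"
    using i by (intro sum.cong refl) (auto simp: Tm_def)
  also have "\<dots> = (\<Sum>r<K. if i div K \<in> A then Cm chi K $$ (i mod K, (i div K * K + r) mod K) * u $ (i div K * K + r) else 0)"
    by (rule sum_block[OF div_lt_M[OF i]])
  also have "\<dots> = (if i div K \<in> A then (\<Sum>r<K. Cm chi K $$ (i mod K, r) * u $ (i div K * K + r)) else 0)"
    by auto
  finally show ?thesis .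
qed


lemma opb_adjF: assumes N: "0 < N" shows "opb N (mat_adjoint (fourier N)) 1"
  unfolding opb_def
proof
  fix u :: "complex vec" assume u: "u \<in> carrier_vec N"
  have "l2norm (mat_adjoint (fourier N) *\<^sub>v u) = l2norm u"
    by (rule unitary_l2norm[OF Fa_carrier]) (use fourier_mult_adj[OF N] adj_adj u in auto)
  then show "l2norm (mat_adjoint (fourier N) *\<^sub>v u) \<le> 1 * l2norm u" by simp
qed

lemma opb_Tm:
  assumes K: "0 < K" and range: "\<And>x. 0 \<le> chi x \<and> chi x \<le> 1"
  shows "opb (K * M) (Tm K M A chi) 1"
proof (rule opb_from_sqn)
  fix u :: "complex vec" assume u: "u \<in> carrier_vec (K * M)"
  define v where "v a = vec K (\<lambda>r. of_real (chi (real r / real K)) * u $ (a * K + r))" for a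
  have vc: "v a \<in> carrier_vec K" for a unfolding v_def by simp
  have entry: "(Tm K M A chi *\<^sub>v u) $ (a * K + j) = (if a \<in> A then of_real (chi (real j / real K)) * (fourier K *\<^sub>v v a) $ j else 0)"
    if a: "a < M" and j: "j < K" for a j
  proof -
    have ij: "a * K + j < K * M" by (rule block_lt[OF a j])
    have "(Tm K M A chi *\<^sub>v u) $ (a * K + j) = (if a \<in> A then (\<Sum>r<K. Cm chi K $$ (j, r) * u $ (a * K + r)) else 0)"
      using Tm_mult_vec[OF K u ij] j by simp
    also have "(\<Sum>r<K. Cm chi K $$ (j, r) * u $ (a * K + r)) = of_real (chi (real j / real K)) * (fourier K *\<^sub>v v a) $ j"
      using j by (simp add: Cm_index scalar_prod_def v_def sum_distrib_left atLeast0LessThan algebra_simps)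
    finally show ?thesis .
  qed
  have "sqn (Tm K M A chi *\<^sub>v u) = (\<Sum>i<K * M. (cmod ((Tm K M A chi *\<^sub>v u) $ i))\<^sup>2)"
    unfolding sqn_def using Tm_carrier[of K M A chi] by simp
  also have "\<dots> = (\<Sum>a<M. \<Sum>j<K. (cmod ((Tm K M A chi *\<^sub>v u) $ (a * K + j)))\<^sup>2)" by (rule sum_split_blocks)
  also have "\<dots> \<le> (\<Sum>a<M. \<Sum>j<K. (cmod ((fourier K *\<^sub>v v a) $ j))\<^sup>2)"
  proof (intro sum_mono)
    fix a j assume a: "a \<in> {..<M}" and j: "j \<in> {..<K}"
    have c: "\<bar>chi (real j / real K)\<bar> \<le> 1" using range[of "real j / real K"] by simp
    have "cmod ((Tm K M A chi *\<^sub>v u) $ (a * K + j)) \<le> cmod ((fourier K *\<^sub>v v a) $ j)"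
      using a j c by (auto simp: entry norm_mult intro!: mult_left_le_one_le)
    then show "(cmod ((Tm K M A chi *\<^sub>v u) $ (a * K + j)))\<^sup>2 \<le> (cmod ((fourier K *\<^sub>v v a) $ j))\<^sup>2"
      by (simp add: power_mono)
  qed
  also have "\<dots> = (\<Sum>a<M. sqn (v a))"
  proof (rule sum.cong[OF refl])
    fix a
    have "(\<Sum>j<K. (cmod ((fourier K *\<^sub>v v a) $ j))\<^sup>2) = sqn (fourier K *\<^sub>v v a)"
      unfolding sqn_def by simp
    also have "\<dots> = sqn (v a)" by (rule unitary_sqn[OF fourier_carrier fourier_adj_mult[OF K] vc])
    finally show "(\<Sum>j<K. (cmod ((fourier K *\<^sub>v v a) $ j))\<^sup>2) = sqn (v a)" .
  qed
  also have "\<dots> \<le> (\<Sum>a<M. \<Sum>r<K. (cmod (u $ (a * K + r)))\<^sup>2)"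
  proof (intro sum_mono)
    fix a
    have "sqn (v a) = (\<Sum>r<K. (cmod (of_real (chi (real r / real K)) * u $ (a * K + r)))\<^sup>2)"
      unfolding sqn_def v_def by simp
    also have "\<dots> \<le> (\<Sum>r<K. (cmod (u $ (a * K + r)))\<^sup>2)"
    proof (intro sum_mono)
      fix r
      have c: "\<bar>chi (real r / real K)\<bar> \<le> 1" using range[of "real r / real K"] by simp
      have "cmod (of_real (chi (real r / real K)) * u $ (a * K + r)) \<le> cmod (u $ (a * K + r))"
        using c by (auto simp: norm_mult intro!: mult_left_le_one_le)
      then show "(cmod (of_real (chi (real r / real K)) * u $ (a * K + r)))\<^sup>2 \<le> (cmod (u $ (a * K + r)))\<^sup>2"
        by (simp add: power_mono)
    qed
    finally show "sqn (v a) \<le> (\<Sum>r<K. (cmod (u $ (a * K + r)))\<^sup>2)" .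
  qed
  also have "\<dots> = 1\<^sup>2 * sqn u"
    unfolding sqn_def using u sum_split_blocks[of "\<lambda>i. (cmod (u $ i))\<^sup>2" K M] by simp
  finally show "sqn (Tm K M A chi *\<^sub>v u) \<le> 1\<^sup>2 * sqn u" .
qed simp

lemma opb_baker:
  assumes K: "0 < K" and M: "0 < M" and A: "A \<subseteq> {0..<M}" and range: "\<And>x. 0 \<le> chi x \<and> chi x \<le> 1"
  shows "opb (K * M) (baker M A chi K) 1"
proof -
  have N: "0 < K * M" using K M by simp
  have "opb (K * M) (mat_adjoint (fourier (K * M)) * Tm K M A chi) (1 * 1)"
    by (rule opb_mult[OF Fa_carrier Tm_carrier opb_adjF[OF N] opb_Tm[OF K range]]) simp
  then show ?thesis using baker_eq[OF K A] by simp
qed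


definition Rk :: "nat \<Rightarrow> nat set \<Rightarrow> complex mat" where
  "Rk N T = mat N N (\<lambda>(i, j). \<Sum>w\<in>T. cnj (fourier N $$ (w, i)) * fourier N $$ (w, j))"

lemma Rk_carrier: "Rk N T \<in> carrier_mat N N" unfolding Rk_def by simp

lemma rank_Rk: assumes "finite T" shows "vec_space.rank N (Rk N T) \<le> card T"
  using assms
proof (induction T rule: finite_induct)
  case empty
  have "Rk N {} = 0\<^sub>m N N" unfolding Rk_def by (rule eq_matI) auto
  then show ?case using vec_space.rank_0I by simp
next
  case (insert w T)
  define R1 where "R1 = mat N N (\<lambda>(i, j). cnj (fourier N $$ (w, i)) * fourier N $$ (w, j))"
  have R1c: "R1 \<in> carrier_mat N N" unfolding R1_def by simp
  have eq: "Rk N (insert w T) = R1 + Rk N T"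
    unfolding Rk_def R1_def using insert by (intro eq_matI) auto
  have r1: "vec_space.rank N R1 \<le> 1"
    by (rule vec_space.rank_le_1_product_entries[OF R1c, of "\<lambda>i. cnj (fourier N $$ (w, i))" "\<lambda>j. fourier N $$ (w, j)"])
      (auto simp: R1_def)
  have "vec_space.rank N (Rk N (insert w T)) \<le> vec_space.rank N R1 + vec_space.rank N (Rk N T)"
    unfolding eq by (rule vec_space.rank_subadditive[OF R1c Rk_carrier])
  then show ?case using r1 insert by simp
qed

lemma Xm_Rk: "Xm N S = Rk N (S \<inter> {..<N})"
proof (rule eq_matI)
  fix i j assume "i < dim_row (Rk N (S \<inter> {..<N}))" "j < dim_col (Rk N (S \<inter> {..<N}))"
  then have i: "i < N" and j: "j < N" unfolding Rk_def by auto
  have l: "(mat_adjoint (fourier N) * Pm N S) $$ (i, q) = (if q \<in> S then cnj (fourier N $$ (q, i)) else 0)"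
    if q: "q < N" for q
  proof -
    have "(mat_adjoint (fourier N) * Pm N S) $$ (i, q) = (\<Sum>p\<in>{0..<N}. cnj (fourier N $$ (p, i)) * Pm N S $$ (p, q))"
      using i q by (simp add: scalar_prod_def)
    also have "\<dots> = (\<Sum>p\<in>{0..<N}. if p = q then (if q \<in> S then cnj (fourier N $$ (q, i)) else 0) else 0)"
      using q by (intro sum.cong refl) (auto simp: Pm_index)
    also have "\<dots> = (if q \<in> S then cnj (fourier N $$ (q, i)) else 0)" using q by simp
    finally show ?thesis .
  qed
  have "Xm N S $$ (i, j) = (\<Sum>q\<in>{0..<N}. (mat_adjoint (fourier N) * Pm N S) $$ (i, q) * fourier N $$ (q, j))"
    unfolding Xm_def using i j by (simp add: scalar_prod_def)
  also have "\<dots> = (\<Sum>q\<in>{0..<N}. if q \<in> S then cnj (fourier N $$ (q, i)) * fourier N $$ (q, j) else 0)"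
    by (intro sum.cong refl) (auto simp: l)
  also have "\<dots> = (\<Sum>q\<in>S \<inter> {..<N}. cnj (fourier N $$ (q, i)) * fourier N $$ (q, j))"
    by (simp add: sum.If_cases atLeast0LessThan Int_commute)
  also have "\<dots> = Rk N (S \<inter> {..<N}) $$ (i, j)" unfolding Rk_def using i j by simp
  finally show "Xm N S $$ (i, j) = Rk N (S \<inter> {..<N}) $$ (i, j)" .
qed (auto simp: Rk_def)

lemma rank_Xm: "vec_space.rank N (Xm N S) \<le> card (S \<inter> {..<N})"
  unfolding Xm_Rk by (rule rank_Rk) simp


lemma ee_mult_nat: "ee (real a * real t) = 1"
  using ee_nat[of "a * t"] by simp

lemma parseval_M:
  fixes c :: "nat \<Rightarrow> complex" and K M :: nat
  assumes M: "0 < M"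
  shows "(\<Sum>a<M. (cmod (\<Sum>\<xi><K * M. ee (real a * real \<xi> / real M) * c \<xi>))\<^sup>2)
       = real M * (\<Sum>r<M. (cmod (\<Sum>t<K. c (t * M + r)))\<^sup>2)"
proof -
  define b where "b = vec M (\<lambda>r. \<Sum>t<K. c (t * M + r))"
  have bc: "b \<in> carrier_vec M" unfolding b_def by simp
  have inner: "(\<Sum>\<xi><K * M. ee (real a * real \<xi> / real M) * c \<xi>) = of_real (sqrt (real M)) * (mat_adjoint (fourier M) *\<^sub>v b) $ a"
    if a: "a < M" for a
  proof -
    have "(\<Sum>\<xi><K * M. ee (real a * real \<xi> / real M) * c \<xi>) = (\<Sum>\<xi><M * K. ee (real a * real \<xi> / real M) * c \<xi>)"
      by (simp add: mult.commute)
    also have "\<dots> = (\<Sum>t<K. \<Sum>r<M. ee (real a * real (t * M + r) / real M) * c (t * M + r))"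
      by (rule sum_split_blocks)
    also have "\<dots> = (\<Sum>t<K. \<Sum>r<M. ee (real a * real r / real M) * c (t * M + r))"
    proof (intro sum.cong refl)
      fix t r
      have "real a * real (t * M + r) / real M = real a * real t + real a * real r / real M"
        using M by (simp add: field_simps)
      then show "ee (real a * real (t * M + r) / real M) * c (t * M + r) = ee (real a * real r / real M) * c (t * M + r)"
        by (simp add: ee_add ee_mult_nat)
    qed
    also have "\<dots> = (\<Sum>r<M. ee (real a * real r / real M) * b $ r)"
      unfolding b_def by (subst sum.swap) (simp add: sum_distrib_left)
    also have "\<dots> = of_real (sqrt (real M)) * (mat_adjoint (fourier M) *\<^sub>v b) $ a"
    proof -
      have "(mat_adjoint (fourier M) *\<^sub>v b) $ a = (\<Sum>r<M. ee (real r * real a / real M) / of_real (sqrt (real M)) * b $ r)"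
        using a bc by (simp add: scalar_prod_def fourier_index cnj_ee atLeast0LessThan)
      moreover have "sqrt (real M) \<noteq> 0" using M by simp
      ultimately show ?thesis by (simp add: sum_distrib_left mult.commute mult.left_commute)
    qed
    finally show ?thesis .
  qed
  have "(\<Sum>a<M. (cmod (\<Sum>\<xi><K * M. ee (real a * real \<xi> / real M) * c \<xi>))\<^sup>2)
      = (\<Sum>a<M. real M * (cmod ((mat_adjoint (fourier M) *\<^sub>v b) $ a))\<^sup>2)"
    by (intro sum.cong refl) (simp add: inner norm_mult power_mult_distrib)
  also have "\<dots> = real M * sqn (mat_adjoint (fourier M) *\<^sub>v b)"
    unfolding sqn_def by (simp add: sum_distrib_left)
  also have "sqn (mat_adjoint (fourier M) *\<^sub>v b) = sqn b"
    by (rule unitary_sqn[OF Fa_carrier _ bc]) (use fourier_mult_adj[OF M] adj_adj in auto)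
  also have "sqn b = (\<Sum>r<M. (cmod (\<Sum>t<K. c (t * M + r)))\<^sup>2)" unfolding sqn_def b_def by simp
  finally show ?thesis .
qed

lemma cs_weighted:
  fixes x y :: "'a \<Rightarrow> complex"
  shows "(cmod (\<Sum>t\<in>T. x t * y t))\<^sup>2 \<le> (\<Sum>t\<in>T. cmod (x t)) * (\<Sum>t\<in>T. cmod (x t) * (cmod (y t))\<^sup>2)"
proof -
  have "cmod (\<Sum>t\<in>T. x t * y t) \<le> (\<Sum>t\<in>T. sqrt (cmod (x t)) * (sqrt (cmod (x t)) * cmod (y t)))"
    using norm_sum[of "\<lambda>t. x t * y t" T] by (simp add: norm_mult mult.assoc[symmetric])
  then have "(cmod (\<Sum>t\<in>T. x t * y t))\<^sup>2 \<le> (\<Sum>t\<in>T. sqrt (cmod (x t)) * (sqrt (cmod (x t)) * cmod (y t)))\<^sup>2"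
    by (simp add: power_mono)
  also have "\<dots> \<le> (\<Sum>t\<in>T. (sqrt (cmod (x t)))\<^sup>2) * (\<Sum>t\<in>T. (sqrt (cmod (x t)) * cmod (y t))\<^sup>2)"
    by (rule Cauchy_Schwarz_ineq_sum)
  also have "\<dots> = (\<Sum>t\<in>T. cmod (x t)) * (\<Sum>t\<in>T. cmod (x t) * (cmod (y t))\<^sup>2)"
    by (simp add: power_mult_distrib)
  finally show ?thesis .
qed

lemma kernel_formula:
  fixes K M :: nat and w :: "complex vec"
  assumes K: "0 < K" and M: "0 < M" and w: "w \<in> carrier_vec (K * M)" and a: "a < M" and j: "j < K"
  shows "(Tm K M A chi *\<^sub>v (mat_adjoint (fourier (K * M)) *\<^sub>v w)) $ (a * K + j)
    = (if a \<in> A then of_real (chi (real j / real K)) *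
        (\<Sum>\<xi><K * M. ee (real a * real \<xi> / real M) *
          ((\<Sum>r<K. of_real (chi (real r / real K)) * ee (real \<xi> / real (K * M) - real j / real K) ^ r)
             / (of_real (sqrt (real K)) * of_real (sqrt (real (K * M))))) * w $ \<xi>)
       else 0)"
proof -
  define N where "N = K * M"
  have N: "0 < N" unfolding N_def using K M by simp
  define x where "x = mat_adjoint (fourier N) *\<^sub>v w"
  have xc: "x \<in> carrier_vec N" unfolding x_def N_def by (rule mult_mat_vec_carrier[OF Fa_carrier w])
  have ij: "a * K + j < N" unfolding N_def by (rule block_lt[OF a j])
  have xp: "x $ p = (\<Sum>\<xi><N. ee (real \<xi> * real p / real N) / of_real (sqrt (real N)) * w $ \<xi>)" if p: "p < N" for p
    unfolding x_def using p w N_def by (simp add: scalar_prod_def fourier_index cnj_ee atLeast0LessThan)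
  have key: "Cm chi K $$ (j, r) * x $ (a * K + r) = of_real (chi (real j / real K)) *
      (\<Sum>\<xi><N. ee (real a * real \<xi> / real M) * (of_real (chi (real r / real K)) * ee (real \<xi> / real N - real j / real K) ^ r
          / (of_real (sqrt (real K)) * of_real (sqrt (real N)))) * w $ \<xi>)"
    if r: "r < K" for r
  proof -
    have p: "a * K + r < N" unfolding N_def by (rule block_lt[OF a r])
    have e: "ee (- (real j * real r / real K)) * ee (real \<xi> * real (a * K + r) / real N)
        = ee (real a * real \<xi> / real M) * ee (real \<xi> / real N - real j / real K) ^ r" for \<xi>
    proof -
      have "- (real j * real r / real K) + real \<xi> * real (a * K + r) / real N
          = real a * real \<xi> / real M + real r * (real \<xi> / real N - real j / real K)"
        unfolding N_def using K M by (simp add: field_simps)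
      then show ?thesis by (metis ee_add ee_power)
    qed
    have "Cm chi K $$ (j, r) * x $ (a * K + r) = of_real (chi (real j / real K)) *
        (\<Sum>\<xi><N. (ee (- (real j * real r / real K)) * ee (real \<xi> * real (a * K + r) / real N))
           * (of_real (chi (real r / real K)) / (of_real (sqrt (real K)) * of_real (sqrt (real N)))) * w $ \<xi>)"
      unfolding xp[OF p] Cm_index[OF j r] fourier_index[OF j r] by (simp add: sum_distrib_left sum_divide_distrib algebra_simps)
    also have "\<dots> = of_real (chi (real j / real K)) *
      (\<Sum>\<xi><N. ee (real a * real \<xi> / real M) * (of_real (chi (real r / real K)) * ee (real \<xi> / real N - real j / real K) ^ r
          / (of_real (sqrt (real K)) * of_real (sqrt (real N)))) * w $ \<xi>)"
      by (simp only: e) (simp add: algebra_simps)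
    finally show ?thesis .
  qed
  have "(Tm K M A chi *\<^sub>v x) $ (a * K + j) = (if a \<in> A then (\<Sum>r<K. Cm chi K $$ (j, r) * x $ (a * K + r)) else 0)"
    using Tm_mult_vec[OF K xc[unfolded N_def] ij[unfolded N_def]] j by simp
  also have "(\<Sum>r<K. Cm chi K $$ (j, r) * x $ (a * K + r)) = of_real (chi (real j / real K)) *
        (\<Sum>\<xi><N. ee (real a * real \<xi> / real M) *
          ((\<Sum>r<K. of_real (chi (real r / real K)) * ee (real \<xi> / real N - real j / real K) ^ r)
             / (of_real (sqrt (real K)) * of_real (sqrt (real N)))) * w $ \<xi>)"
  proof -
    define c where "c = of_real (sqrt (real K)) * (of_real (sqrt (real N)) :: complex)"
    define g where "g r \<xi> = of_real (chi (real r / real K)) * ee (real \<xi> / real N - real j / real K) ^ r" for r \<xi>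
    define e where "e \<xi> = ee (real a * real \<xi> / real M)" for \<xi>
    have "(\<Sum>r<K. Cm chi K $$ (j, r) * x $ (a * K + r)) = (\<Sum>r<K. of_real (chi (real j / real K)) * (\<Sum>\<xi><N. e \<xi> * (g r \<xi> / c) * w $ \<xi>))"
      unfolding c_def g_def e_def by (rule sum.cong[OF refl]) (rule key, simp)
    also have "\<dots> = of_real (chi (real j / real K)) * (\<Sum>r<K. \<Sum>\<xi><N. e \<xi> * (g r \<xi> / c) * w $ \<xi>)"
      by (simp add: sum_distrib_left)
    also have "(\<Sum>r<K. \<Sum>\<xi><N. e \<xi> * (g r \<xi> / c) * w $ \<xi>) = (\<Sum>\<xi><N. \<Sum>r<K. e \<xi> * (g r \<xi> / c) * w $ \<xi>)"
      by (rule sum.swap)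
    also have "\<dots> = (\<Sum>\<xi><N. e \<xi> * ((\<Sum>r<K. g r \<xi>) / c) * w $ \<xi>)"
      by (intro sum.cong refl) (simp add: sum_distrib_left sum_distrib_right sum_divide_distrib)
    finally show ?thesis unfolding c_def g_def e_def .
  qed
  finally show ?thesis unfolding x_def N_def .
qed


definition Gk :: "nat \<Rightarrow> nat \<Rightarrow> (real \<Rightarrow> real) \<Rightarrow> nat \<Rightarrow> nat \<Rightarrow> complex" where
  "Gk K M chi j \<xi> = (\<Sum>r<K. of_real (chi (real r / real K)) * ee (real \<xi> / real (K * M) - real j / real K) ^ r)
             / (of_real (sqrt (real K)) * of_real (sqrt (real (K * M))))"

definition theta :: "nat \<Rightarrow> nat \<Rightarrow> nat \<Rightarrow> nat \<Rightarrow> real" where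
  "theta K M j \<xi> = real \<xi> / real (K * M) - real j / real K"

definition Gf :: "nat \<Rightarrow> nat \<Rightarrow> (real \<Rightarrow> real) \<Rightarrow> real \<Rightarrow> nat \<Rightarrow> nat \<Rightarrow> complex" where
  "Gf K M chi d j \<xi> = (if d / 2 \<le> real K * nd (theta K M j \<xi>) then Gk K M chi j \<xi> else 0)"

definition ff :: "real \<Rightarrow> real" where "ff x = 1 / (1 + \<bar>x\<bar>)\<^sup>2"

lemma ff_nonneg: "0 \<le> ff x" unfolding ff_def by simp

lemma ff_neg: "ff (- x) = ff x" unfolding ff_def by simp

lemma ee_exp: "ee t = exp (\<i> * of_real (2 * pi * t))"
  unfolding ee_def by (simp add: algebra_simps)

lemma theta_abs: assumes "j < K" "\<xi> < K * M" shows "\<bar>theta K M j \<xi>\<bar> \<le> 1"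
proof -
  have "0 < K * M" using assms(2) by linarith
  then have p: "0 < real (K * M)" by (simp only: of_nat_0_less_iff)
  have q: "real \<xi> < real (K * M)" using assms(2) by (simp only: of_nat_less_iff)
  have "real \<xi> / real (K * M) < 1" using p q by (simp add: divide_less_eq del: of_nat_mult)
  moreover have "real j / real K < 1" using assms by (auto simp: divide_less_eq)
  moreover have "0 \<le> real \<xi> / real (K * M)" "0 \<le> real j / real K" by auto
  moreover have "\<And>a b :: real. a < 1 \<Longrightarrow> b < 1 \<Longrightarrow> 0 \<le> a \<Longrightarrow> 0 \<le> b \<Longrightarrow> \<bar>a - b\<bar> \<le> 1" by linarith
  ultimately show ?thesis unfolding theta_def by blast
qed

lemma K_theta: assumes K: "0 < K" and M: "0 < M"
  shows "real K * \<bar>theta K M j \<xi>\<bar> = \<bar>real \<xi> / real M - real j\<bar>"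
proof -
  have "real K * theta K M j \<xi> = real \<xi> / real M - real j"
    unfolding theta_def using K M by (simp add: field_simps)
  then show ?thesis using K by (metis abs_mult abs_of_nat)
qed

lemma Gk_bound:
  assumes chi: "Cc_inf_01 chi" and range: "\<And>x. 0 \<le> chi x \<and> chi x \<le> 1"
    and K: "0 < K" and M: "0 < M" and j: "j < K" and \<xi>: "\<xi> < K * M"
    and y: "0 < real K * nd (theta K M j \<xi>)"
  shows "cmod (Gk K M chi j \<xi>) \<le> hfun chi (real K * nd (theta K M j \<xi>)) / sqrt (real M)"
proof -
  define t where "t = theta K M j \<xi>"
  have S: "cmod (\<Sum>m<K. of_real (chi (real m / real K)) * exp (\<i> * of_real (2 * pi * t)) ^ m)
      \<le> real K * hfun chi (real K * nd t)"
    by (rule S_bound[OF chi range _ theta_abs[OF j \<xi>, folded t_def] refl]) (use K y t_def in auto)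
  have sq: "sqrt (real K) * sqrt (real (K * M)) = real K * sqrt (real M)"
    by (simp add: real_sqrt_mult)
  have "cmod (Gk K M chi j \<xi>) = cmod (\<Sum>m<K. of_real (chi (real m / real K)) * exp (\<i> * of_real (2 * pi * t)) ^ m)
      / (sqrt (real K) * sqrt (real (K * M)))"
    unfolding Gk_def t_def theta_def ee_exp by (simp add: norm_divide norm_mult)
  also have "\<dots> \<le> real K * hfun chi (real K * nd t) / (real K * sqrt (real M))"
    unfolding sq using S K M by (intro divide_right_mono) auto
  also have "\<dots> = hfun chi (real K * nd t) / sqrt (real M)" using K by simp
  finally show ?thesis unfolding t_def .
qed

lemma y_ff:
  assumes K: "0 < K" and M: "0 < M" and j: "j < K" and \<xi>: "\<xi> < K * M"
  shows "1 / (1 + real K * nd (theta K M j \<xi>))\<^sup>2 \<le>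
    ff (real \<xi> / real M - real j) + ff (real j + real K - real \<xi> / real M) + ff (real \<xi> / real M - real j + real K)"
proof -
  define u where "u = real \<xi> / real M - real j"
  have Kt: "real K * \<bar>theta K M j \<xi>\<bar> = \<bar>u\<bar>" unfolding u_def by (rule K_theta[OF K M])
  have Kt2: "real K * (1 - \<bar>theta K M j \<xi>\<bar>) = real K - \<bar>u\<bar>" using Kt by (simp add: algebra_simps)
  have y: "real K * nd (theta K M j \<xi>) = min \<bar>u\<bar> (real K - \<bar>u\<bar>)"
    unfolding nd_def using Kt Kt2 K by (simp add: min_mult_distrib_left)
  have th: "\<bar>theta K M j \<xi>\<bar> \<le> 1" by (rule theta_abs[OF j \<xi>])
  then have uK: "\<bar>u\<bar> \<le> real K" using Kt K by (metis mult.right_neutral mult_left_mono of_nat_0_le_iff)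
  have f0: "0 \<le> ff x" for x by (rule ff_nonneg)
  show ?thesis
  proof (cases "\<bar>u\<bar> \<le> real K - \<bar>u\<bar>")
    case True
    then have "1 / (1 + real K * nd (theta K M j \<xi>))\<^sup>2 = ff u" unfolding y ff_def by simp
    then show ?thesis using f0 unfolding u_def by (smt (verit))
  next
    case False
    then have e: "1 / (1 + real K * nd (theta K M j \<xi>))\<^sup>2 = ff (real K - \<bar>u\<bar>)"
      unfolding y ff_def using uK by simp
    show ?thesis
    proof (cases "u \<ge> 0")
      case True
      have "ff (real K - \<bar>u\<bar>) = ff (real j + real K - real \<xi> / real M)"
        using True unfolding u_def by (simp add: algebra_simps)
      then show ?thesis using e f0 unfolding u_def by (smt (verit))
    next
      case False
      have "ff (real K - \<bar>u\<bar>) = ff (real \<xi> / real M - real j + real K)"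
        using False unfolding u_def by (simp add: algebra_simps)
      then show ?thesis using e f0 unfolding u_def by (smt (verit))
    qed
  qed
qed

definition betaC :: "(real \<Rightarrow> real) \<Rightarrow> nat \<Rightarrow> real \<Rightarrow> real" where
  "betaC chi M d = sqrt (hfun chi (d / 2)) * Cq chi / sqrt (real M)"

lemma betaC_nonneg: "Cc_inf_01 chi \<Longrightarrow> 0 < d \<Longrightarrow> 0 \<le> betaC chi M d"
  unfolding betaC_def using hfun_nonneg[of chi "d/2"] Cq_pos[of chi] by simp

lemma Gf_pt:
  assumes chi: "Cc_inf_01 chi" and range: "\<And>x. 0 \<le> chi x \<and> chi x \<le> 1"
    and K: "0 < K" and M: "0 < M" and j: "j < K" and \<xi>: "\<xi> < K * M" and d: "0 < d"
  shows "cmod (Gf K M chi d j \<xi>) \<le> betaC chi M d *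
    (ff (real \<xi> / real M - real j) + ff (real j + real K - real \<xi> / real M) + ff (real \<xi> / real M - real j + real K))"
proof (cases "d / 2 \<le> real K * nd (theta K M j \<xi>)")
  case False
  then show ?thesis unfolding Gf_def using betaC_nonneg[OF chi d, of M] ff_nonneg by simp
next
  case True
  define y where "y = real K * nd (theta K M j \<xi>)"
  have y: "0 < y" "d / 2 \<le> y" using True d unfolding y_def by auto
  have d2: "0 < d / 2" using d by simp
  have h1: "hfun chi y \<le> sqrt (hfun chi (d / 2)) * sqrt (hfun chi y)"
  proof -
    have "hfun chi y = sqrt (hfun chi y) * sqrt (hfun chi y)" using hfun_nonneg[OF chi y(1)] by simp
    also have "\<dots> \<le> sqrt (hfun chi (d / 2)) * sqrt (hfun chi y)"
      using hfun_antimono[OF chi d2 y(2)] hfun_nonneg[OF chi y(1)] by (intro mult_right_mono real_sqrt_le_mono) auto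
    finally show ?thesis .
  qed
  have "cmod (Gf K M chi d j \<xi>) = cmod (Gk K M chi j \<xi>)" unfolding Gf_def using True by simp
  also have "\<dots> \<le> hfun chi y / sqrt (real M)" unfolding y_def by (rule Gk_bound[OF chi range K M j \<xi> y(1)[unfolded y_def]])
  also have "\<dots> \<le> sqrt (hfun chi (d / 2)) * sqrt (hfun chi y) / sqrt (real M)"
    using h1 by (intro divide_right_mono) auto
  also have "\<dots> \<le> sqrt (hfun chi (d / 2)) * (Cq chi / (1 + y)\<^sup>2) / sqrt (real M)"
    using sqrt_hfun_quad[OF chi y(1)] hfun_nonneg[OF chi d2] by (intro divide_right_mono mult_left_mono) auto
  also have "\<dots> = betaC chi M d * (1 / (1 + y)\<^sup>2)" unfolding betaC_def by simp
  also have "\<dots> \<le> betaC chi M d *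
    (ff (real \<xi> / real M - real j) + ff (real j + real K - real \<xi> / real M) + ff (real \<xi> / real M - real j + real K))"
    unfolding y_def by (intro mult_left_mono y_ff[OF K M j \<xi>] betaC_nonneg[OF chi d])
  finally show ?thesis .
qed

lemma lattice_sum': "(\<Sum>t<K. ff (real t + g)) \<le> 4"
  unfolding ff_def by (rule lattice_sum)

lemma Gf_col:
  assumes chi: "Cc_inf_01 chi" and range: "\<And>x. 0 \<le> chi x \<and> chi x \<le> 1"
    and K: "0 < K" and M: "0 < M" and \<xi>: "\<xi> < K * M" and d: "0 < d"
  shows "(\<Sum>j<K. cmod (Gf K M chi d j \<xi>)) \<le> 12 * betaC chi M d"
proof -
  define x where "x = real \<xi> / real M"
  have "(\<Sum>j<K. cmod (Gf K M chi d j \<xi>)) \<le> (\<Sum>j<K. betaC chi M d *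
    (ff (real j + - x) + ff (real j + (real K - x)) + ff (real j + (- x - real K))))"
  proof (rule sum_mono)
    fix j assume j: "j \<in> {..<K}"
    have e1: "ff (real \<xi> / real M - real j) = ff (real j + - x)"
    proof -
      have "real \<xi> / real M - real j = - (real j + - x)" unfolding x_def by simp
      then show ?thesis by (simp only: ff_neg)
    qed
    have e2: "ff (real j + real K - real \<xi> / real M) = ff (real j + (real K - x))"
    proof -
      have "real j + real K - real \<xi> / real M = real j + (real K - x)" unfolding x_def by simp
      then show ?thesis by (simp only:)
    qed
    have e3: "ff (real \<xi> / real M - real j + real K) = ff (real j + (- x - real K))"
    proof -
      have "real \<xi> / real M - real j + real K = - (real j + (- x - real K))" unfolding x_def by simp
      then show ?thesis by (simp only: ff_neg)
    qed
    show "cmod (Gf K M chi d j \<xi>) \<le> betaC chi M d *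
      (ff (real j + - x) + ff (real j + (real K - x)) + ff (real j + (- x - real K)))"
      using Gf_pt[OF chi range K M _ \<xi> d, of j] j unfolding e1 e2 e3 by simp
  qed
  also have "\<dots> = betaC chi M d * (\<Sum>j<K. ff (real j + - x) + ff (real j + (real K - x)) + ff (real j + (- x - real K)))"
    by (rule sum_distrib_left[symmetric])
  also have "\<dots> = betaC chi M d * ((\<Sum>j<K. ff (real j + - x)) + (\<Sum>j<K. ff (real j + (real K - x))) + (\<Sum>j<K. ff (real j + (- x - real K))))"
    by (simp only: sum.distrib)
  also have "\<dots> \<le> betaC chi M d * (4 + 4 + 4)"
    by (intro mult_left_mono add_mono lattice_sum' betaC_nonneg[OF chi d])
  finally show ?thesis by simp
qed

lemma Gf_row:
  assumes chi: "Cc_inf_01 chi" and range: "\<And>x. 0 \<le> chi x \<and> chi x \<le> 1"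
    and K: "0 < K" and M: "0 < M" and j: "j < K" and r: "r < M" and d: "0 < d"
  shows "(\<Sum>t<K. cmod (Gf K M chi d j (t * M + r))) \<le> 12 * betaC chi M d"
proof -
  define x where "x = real r / real M - real j"
  have "(\<Sum>t<K. cmod (Gf K M chi d j (t * M + r))) \<le> (\<Sum>t<K. betaC chi M d *
    (ff (real t + x) + ff (real t + (x - real K)) + ff (real t + (x + real K))))"
  proof (rule sum_mono)
    fix t assume t: "t \<in> {..<K}"
    have tM: "t * M + r < K * M" using block_lt[of t K r M] t r by (simp add: mult.commute)
    have e: "real (t * M + r) / real M = real t + real r / real M" using M by (simp add: field_simps)
    have "ff (real j + real K - real (t * M + r) / real M) = ff (real t + (x - real K))"
      unfolding e x_def using ff_neg[of "real t + (real r / real M - real j - real K)"] by (simp add: algebra_simps)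
    then show "cmod (Gf K M chi d j (t * M + r)) \<le> betaC chi M d *
      (ff (real t + x) + ff (real t + (x - real K)) + ff (real t + (x + real K)))"
      using Gf_pt[OF chi range K M j tM d] unfolding e x_def by (simp add: algebra_simps)
  qed
  also have "\<dots> = betaC chi M d * (\<Sum>t<K. ff (real t + x) + ff (real t + (x - real K)) + ff (real t + (x + real K)))"
    by (rule sum_distrib_left[symmetric])
  also have "\<dots> = betaC chi M d * ((\<Sum>t<K. ff (real t + x)) + (\<Sum>t<K. ff (real t + (x - real K))) + (\<Sum>t<K. ff (real t + (x + real K))))"
    by (simp only: sum.distrib)
  also have "\<dots> \<le> betaC chi M d * (4 + 4 + 4)"
    using betaC_nonneg[OF chi d, of M] lattice_sum' by (intro mult_left_mono add_mono) auto
  finally show ?thesis by simp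
qed


lemma far_lemma:
  assumes K: "0 < K" and M: "0 < M" and d: "0 < d" and j: "j < K" and \<xi>: "\<xi> < K * M"
    and dj: "d \<le> 2 * real K * min (real j / real K) (1 - real j / real K)"
    and sep: "d < \<bar>real j - real \<xi> / real M\<bar>"
  shows "d / 2 \<le> real K * nd (theta K M j \<xi>)"
proof -
  define th where "th = theta K M j \<xi>"
  have Kt: "real K * \<bar>th\<bar> = \<bar>real \<xi> / real M - real j\<bar>" unfolding th_def by (rule K_theta[OF K M])
  have a1: "d / 2 \<le> real K * \<bar>th\<bar>" using Kt sep d by (simp add: abs_minus_commute)
  have "0 < K * M" using \<xi> by linarith
  then have p: "0 < real (K * M)" by (simp only: of_nat_0_less_iff)
  have q: "real \<xi> < real (K * M)" using \<xi> by (simp only: of_nat_less_iff)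
  have x1: "real \<xi> / real (K * M) \<le> 1" using p q by (simp add: divide_le_eq del: of_nat_mult)
  have x0: "0 \<le> real \<xi> / real (K * M)" by simp
  have "min (real j / real K) (1 - real j / real K) \<le> 1 - \<bar>th\<bar>"
    unfolding th_def theta_def using x0 x1 by linarith
  then have "real K * min (real j / real K) (1 - real j / real K) \<le> real K * (1 - \<bar>th\<bar>)"
    by (intro mult_left_mono) auto
  then have a2: "d / 2 \<le> real K * (1 - \<bar>th\<bar>)" using dj by linarith
  have "real K * nd th = min (real K * \<bar>th\<bar>) (real K * (1 - \<bar>th\<bar>))"
    unfolding nd_def by (simp add: min_mult_distrib_left)
  then show ?thesis using a1 a2 unfolding th_def by simp
qed

lemma key_estimate:
  fixes K M :: nat and S S' :: "nat set" and d :: real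
  assumes chi: "Cc_inf_01 chi" and range: "\<And>x. 0 \<le> chi x \<and> chi x \<le> 1"
    and K: "0 < K" and M: "0 < M" and d: "0 < d"
    and dchi: "\<And>j. j < K \<Longrightarrow> chi (real j / real K) \<noteq> 0 \<Longrightarrow> d \<le> 2 * real K * min (real j / real K) (1 - real j / real K)"
    and sep: "\<And>\<xi> a j. \<xi> < K * M \<Longrightarrow> a \<in> A \<Longrightarrow> j < K \<Longrightarrow> \<xi> \<in> S' \<Longrightarrow> a * K + j \<notin> S \<Longrightarrow>
       chi (real j / real K) \<noteq> 0 \<Longrightarrow> d < \<bar>real j - real \<xi> / real M\<bar>"
  shows "opb (K * M) (Pm (K * M) (- S) * Tm K M A chi * mat_adjoint (fourier (K * M)) * Pm (K * M) S') (gfun chi d)"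
proof (rule opb_from_sqn)
  define N where "N = K * M"
  have N: "0 < N" unfolding N_def using K M by simp
  show "0 \<le> gfun chi d" using gfun_nonneg[OF chi d] .
  fix w :: "complex vec" assume w: "w \<in> carrier_vec (K * M)"
  define w' where "w' = Pm N S' *\<^sub>v w"
  have w'c: "w' \<in> carrier_vec N" unfolding w'_def N_def using w by (simp add: mult_mat_vec_carrier[OF Pm_carrier])
  define x where "x = mat_adjoint (fourier N) *\<^sub>v w'"
  have xc: "x \<in> carrier_vec N" unfolding x_def by (rule mult_mat_vec_carrier[OF Fa_carrier w'c])
  define t where "t = Tm K M A chi *\<^sub>v x"
  have tc: "t \<in> carrier_vec N" unfolding t_def N_def by (rule mult_mat_vec_carrier[OF Tm_carrier xc[unfolded N_def]])
  define ov where "ov = Pm N (- S) *\<^sub>v t"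
  have Qw: "(Pm N (- S) * Tm K M A chi * mat_adjoint (fourier N) * Pm N S') *\<^sub>v w = ov"
  proof -
    have c1: "Pm N (- S) * Tm K M A chi \<in> carrier_mat N N" unfolding N_def by (rule mult_carrier_mat[OF Pm_carrier Tm_carrier])
    have c2: "Pm N (- S) * Tm K M A chi * mat_adjoint (fourier N) \<in> carrier_mat N N"
      using c1 Fa_carrier by simp
    have "(Pm N (- S) * Tm K M A chi * mat_adjoint (fourier N) * Pm N S') *\<^sub>v w
        = (Pm N (- S) * Tm K M A chi * mat_adjoint (fourier N)) *\<^sub>v w'"
      unfolding w'_def by (rule assoc_mult_mat_vec[OF c2 Pm_carrier w[folded N_def]])
    also have "\<dots> = (Pm N (- S) * Tm K M A chi) *\<^sub>v x"
      unfolding x_def by (rule assoc_mult_mat_vec[OF c1 Fa_carrier w'c])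
    also have "\<dots> = ov"
      unfolding ov_def t_def N_def by (rule assoc_mult_mat_vec[OF Pm_carrier Tm_carrier xc[unfolded N_def]])
    finally show ?thesis .
  qed
  define c where "c j \<xi> = Gf K M chi d j \<xi> * w' $ \<xi>" for j \<xi>
  define V where "V a j = (\<Sum>\<xi><K * M. ee (real a * real \<xi> / real M) * c j \<xi>)" for a j
  have w'e: "w' $ \<xi> = (if \<xi> \<in> S' then w $ \<xi> else 0)" if "\<xi> < N" for \<xi>
    using w that unfolding w'_def N_def by (simp add: Pm_mult_vec del: index_mult_mat_vec)
  have pc: "cmod (ov $ (a * K + j)) \<le> cmod (V a j)" if a: "a < M" and j: "j < K" for a j
  proof -
    have i: "a * K + j < N" unfolding N_def by (rule block_lt[OF a j])
    have oe: "ov $ (a * K + j) = (if a * K + j \<in> S then 0 else t $ (a * K + j))"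
      unfolding ov_def using tc i by (simp add: Pm_mult_vec del: index_mult_mat_vec)
    have te: "t $ (a * K + j) = (if a \<in> A then of_real (chi (real j / real K)) *
        (\<Sum>\<xi><K * M. ee (real a * real \<xi> / real M) * Gk K M chi j \<xi> * w' $ \<xi>) else 0)"
      unfolding t_def x_def N_def Gk_def by (rule kernel_formula[OF K M w'c[unfolded N_def] a j])
    show ?thesis
    proof (cases "a * K + j \<notin> S \<and> a \<in> A \<and> chi (real j / real K) \<noteq> 0")
      case False
      then have "ov $ (a * K + j) = 0" using oe te by auto
      then show ?thesis by simp
    next
      case True
      have dj: "d \<le> 2 * real K * min (real j / real K) (1 - real j / real K)" using dchi[OF j] True by simp
      have eq: "(\<Sum>\<xi><K * M. ee (real a * real \<xi> / real M) * Gk K M chi j \<xi> * w' $ \<xi>) = V a j"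
        unfolding V_def c_def
      proof (rule sum.cong[OF refl])
        fix \<xi> assume \<xi>: "\<xi> \<in> {..<K * M}"
        show "ee (real a * real \<xi> / real M) * Gk K M chi j \<xi> * w' $ \<xi> = ee (real a * real \<xi> / real M) * (Gf K M chi d j \<xi> * w' $ \<xi>)"
        proof (cases "\<xi> \<in> S'")
          case False then show ?thesis using w'e[of \<xi>] \<xi> N_def by simp
        next
          case True2: True
          have "d < \<bar>real j - real \<xi> / real M\<bar>"
            by (rule sep) (use \<xi> True True2 a j in auto)
          then have "d / 2 \<le> real K * nd (theta K M j \<xi>)"
            using far_lemma[OF K M d j _ dj] \<xi> by auto
          then show ?thesis unfolding Gf_def by simp
        qed
      qed
      have "ov $ (a * K + j) = of_real (chi (real j / real K)) * V a j" using oe te True eq by simp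
      moreover have "\<bar>chi (real j / real K)\<bar> \<le> 1" using range[of "real j / real K"] by simp
      ultimately show ?thesis by (simp add: norm_mult mult_left_le_one_le)
    qed
  qed
  define \<beta> where "\<beta> = betaC chi M d"
  have \<beta>0: "0 \<le> \<beta>" unfolding \<beta>_def by (rule betaC_nonneg[OF chi d])
  have "sqn ((Pm (K * M) (- S) * Tm K M A chi * mat_adjoint (fourier (K * M)) * Pm (K * M) S') *\<^sub>v w) = sqn ov"
    using Qw unfolding N_def by simp
  also have "sqn ov = (\<Sum>i<K * M. (cmod (ov $ i))\<^sup>2)" unfolding sqn_def ov_def N_def by simp
  also have "\<dots> = (\<Sum>a<M. \<Sum>j<K. (cmod (ov $ (a * K + j)))\<^sup>2)" by (rule sum_split_blocks)
  also have "\<dots> \<le> (\<Sum>a<M. \<Sum>j<K. (cmod (V a j))\<^sup>2)"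
    using pc by (intro sum_mono power_mono) auto
  also have "\<dots> = (\<Sum>j<K. \<Sum>a<M. (cmod (V a j))\<^sup>2)" by (rule sum.swap)
  also have "\<dots> = (\<Sum>j<K. real M * (\<Sum>r<M. (cmod (\<Sum>t<K. c j (t * M + r)))\<^sup>2))"
    unfolding V_def by (intro sum.cong refl parseval_M[OF M])
  also have "\<dots> \<le> (\<Sum>j<K. real M * (\<Sum>r<M. (12 * \<beta>) * (\<Sum>t<K. cmod (Gf K M chi d j (t * M + r)) * (cmod (w' $ (t * M + r)))\<^sup>2)))"
  proof (intro sum_mono mult_left_mono)
    fix j r assume j: "j \<in> {..<K}" and r: "r \<in> {..<M}"
    have "(cmod (\<Sum>t<K. c j (t * M + r)))\<^sup>2 \<le> (\<Sum>t<K. cmod (Gf K M chi d j (t * M + r))) *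
        (\<Sum>t<K. cmod (Gf K M chi d j (t * M + r)) * (cmod (w' $ (t * M + r)))\<^sup>2)"
      unfolding c_def by (rule cs_weighted)
    also have "\<dots> \<le> (12 * \<beta>) * (\<Sum>t<K. cmod (Gf K M chi d j (t * M + r)) * (cmod (w' $ (t * M + r)))\<^sup>2)"
      using Gf_row[OF chi range K M _ _ d, of j r] j r unfolding \<beta>_def
      by (intro mult_right_mono sum_nonneg) auto
    finally show "(cmod (\<Sum>t<K. c j (t * M + r)))\<^sup>2 \<le> (12 * \<beta>) * (\<Sum>t<K. cmod (Gf K M chi d j (t * M + r)) * (cmod (w' $ (t * M + r)))\<^sup>2)" .
  qed simp
  also have "\<dots> = (12 * \<beta>) * real M * (\<Sum>j<K. \<Sum>r<M. \<Sum>t<K. cmod (Gf K M chi d j (t * M + r)) * (cmod (w' $ (t * M + r)))\<^sup>2)"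
    by (simp add: sum_distrib_left mult.assoc mult.left_commute)
  also have "(\<Sum>j<K. \<Sum>r<M. \<Sum>t<K. cmod (Gf K M chi d j (t * M + r)) * (cmod (w' $ (t * M + r)))\<^sup>2)
      = (\<Sum>j<K. \<Sum>\<xi><K * M. cmod (Gf K M chi d j \<xi>) * (cmod (w' $ \<xi>))\<^sup>2)"
  proof (rule sum.cong[OF refl])
    fix j
    have "(\<Sum>\<xi><K * M. cmod (Gf K M chi d j \<xi>) * (cmod (w' $ \<xi>))\<^sup>2) = (\<Sum>\<xi><M * K. cmod (Gf K M chi d j \<xi>) * (cmod (w' $ \<xi>))\<^sup>2)"
      by (simp add: mult.commute)
    also have "\<dots> = (\<Sum>t<K. \<Sum>r<M. cmod (Gf K M chi d j (t * M + r)) * (cmod (w' $ (t * M + r)))\<^sup>2)"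
      by (rule sum_split_blocks)
    also have "\<dots> = (\<Sum>r<M. \<Sum>t<K. cmod (Gf K M chi d j (t * M + r)) * (cmod (w' $ (t * M + r)))\<^sup>2)"
      by (rule sum.swap)
    finally show "(\<Sum>r<M. \<Sum>t<K. cmod (Gf K M chi d j (t * M + r)) * (cmod (w' $ (t * M + r)))\<^sup>2)
      = (\<Sum>\<xi><K * M. cmod (Gf K M chi d j \<xi>) * (cmod (w' $ \<xi>))\<^sup>2)" by simp
  qed
  also have "(\<Sum>j<K. \<Sum>\<xi><K * M. cmod (Gf K M chi d j \<xi>) * (cmod (w' $ \<xi>))\<^sup>2)
      = (\<Sum>\<xi><K * M. (cmod (w' $ \<xi>))\<^sup>2 * (\<Sum>j<K. cmod (Gf K M chi d j \<xi>)))"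
    by (subst sum.swap) (simp add: sum_distrib_left mult.commute)
  also have "\<dots> \<le> (\<Sum>\<xi><K * M. (cmod (w' $ \<xi>))\<^sup>2 * (12 * \<beta>))"
    using Gf_col[OF chi range K M _ d] unfolding \<beta>_def by (intro sum_mono mult_left_mono) auto
  also have "\<dots> = (12 * \<beta>) * sqn w'" unfolding sqn_def using w'c N_def by (simp add: sum_distrib_left[symmetric] mult.commute)
  finally have A1: "sqn ((Pm (K * M) (- S) * Tm K M A chi * mat_adjoint (fourier (K * M)) * Pm (K * M) S') *\<^sub>v w)
      \<le> (12 * \<beta>) * real M * ((12 * \<beta>) * sqn w')"
    using \<beta>0 by (simp add: mult_left_mono)
  have A2: "sqn w' \<le> sqn w"
  proof -
    have "sqn w' = (\<Sum>\<xi><N. (cmod (if \<xi> \<in> S' then w $ \<xi> else 0))\<^sup>2)"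
      unfolding sqn_def using w'c w'e by (intro sum.cong) auto
    also have "\<dots> \<le> (\<Sum>\<xi><N. (cmod (w $ \<xi>))\<^sup>2)" by (intro sum_mono) auto
    also have "\<dots> = sqn w" unfolding sqn_def using w N_def by simp
    finally show ?thesis .
  qed
  have A3: "(12 * \<beta>) * real M * (12 * \<beta>) = (gfun chi d)\<^sup>2"
  proof -
    have "\<beta> * \<beta> * real M = hfun chi (d / 2) * (Cq chi)\<^sup>2"
      unfolding \<beta>_def betaC_def using hfun_nonneg[OF chi, of "d / 2"] d M
      by (simp add: power2_eq_square field_simps)
    then show ?thesis unfolding gfun_def using hfun_nonneg[OF chi, of "d / 2"] d
      by (simp add: power2_eq_square algebra_simps)
  qed
  have "(12 * \<beta>) * real M * ((12 * \<beta>) * sqn w') \<le> (12 * \<beta>) * real M * ((12 * \<beta>) * sqn w)"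
    using A2 \<beta>0 by (intro mult_left_mono) auto
  also have "\<dots> = (gfun chi d)\<^sup>2 * sqn w" using A3 by (simp add: mult.assoc[symmetric])
  finally show "sqn ((Pm (K * M) (- S) * Tm K M A chi * mat_adjoint (fourier (K * M)) * Pm (K * M) S') *\<^sub>v w)
      \<le> (gfun chi d)\<^sup>2 * sqn w" using A1 by linarith
qed


primrec Uset :: "nat \<Rightarrow> nat set \<Rightarrow> (nat \<Rightarrow> real) \<Rightarrow> nat \<Rightarrow> real set" where
  "Uset M A dd 0 = {0..1}"
| "Uset M A dd (Suc k) = {y. \<exists>a\<in>A. \<exists>x\<in>Uset M A dd k. \<bar>y - (real a + x) / real M\<bar> \<le> dd (Suc k)}"

primrec Lk :: "nat \<Rightarrow> (nat \<Rightarrow> real) \<Rightarrow> nat \<Rightarrow> real" where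
  "Lk M dd 0 = 1"
| "Lk M dd (Suc k) = Lk M dd k / real M + 2 * dd (Suc k)"

lemma Uset_cover:
  assumes fin: "finite A" and M: "0 < M"
  shows "\<exists>W. finite W \<and> card W \<le> card A ^ k \<and> Uset M A dd k \<subseteq> (\<Union>c\<in>W. {c..c + Lk M dd k})"
proof (induction k)
  case 0
  show ?case by (intro exI[of _ "{0}"]) auto
next
  case (Suc k)
  then obtain W where W: "finite W" "card W \<le> card A ^ k" "Uset M A dd k \<subseteq> (\<Union>c\<in>W. {c..c + Lk M dd k})" by blast
  define f where "f = (\<lambda>(a::nat, c). (real a + c) / real M - dd (Suc k))"
  define W' where "W' = f ` (A \<times> W)"
  have fW': "finite W'" unfolding W'_def using fin W(1) by simp
  have cW': "card W' \<le> card A ^ Suc k"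
  proof -
    have "card W' \<le> card (A \<times> W)" unfolding W'_def by (rule card_image_le) (use fin W(1) in simp)
    also have "\<dots> = card A * card W" by (rule card_cartesian_product)
    also have "\<dots> \<le> card A * card A ^ k" using W(2) by simp
    finally show ?thesis by simp
  qed
  have "Uset M A dd (Suc k) \<subseteq> (\<Union>c\<in>W'. {c..c + Lk M dd (Suc k)})"
  proof
    fix y assume "y \<in> Uset M A dd (Suc k)"
    then obtain a x where a: "a \<in> A" and x: "x \<in> Uset M A dd k" and yx: "\<bar>y - (real a + x) / real M\<bar> \<le> dd (Suc k)"
      by auto
    have "x \<in> (\<Union>c\<in>W. {c..c + Lk M dd k})" using W(3) x by (rule subsetD)
    then obtain c where c0: "c \<in> W" and cx: "x \<in> {c..c + Lk M dd k}" by (rule UN_E)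
    then have c: "c \<in> W" "c \<le> x" "x \<le> c + Lk M dd k" by auto
    have "(real a + c) / real M \<le> (real a + x) / real M" using c M by (simp add: divide_right_mono)
    moreover have "(real a + x) / real M \<le> (real a + c) / real M + Lk M dd k / real M"
      using c M by (simp add: add_divide_distrib[symmetric] divide_right_mono)
    ultimately have "f (a, c) \<le> y \<and> y \<le> f (a, c) + Lk M dd (Suc k)"
      unfolding f_def using yx by auto
    moreover have "f (a, c) \<in> W'" unfolding W'_def using a c by auto
    ultimately show "y \<in> (\<Union>c\<in>W'. {c..c + Lk M dd (Suc k)})" by auto
  qed
  then show ?case using fW' cW' by blast
qed

lemma card_interval_nat:
  assumes N: "0 < N" and L: "0 \<le> L"
  shows "card {\<xi>::nat. \<xi> < N \<and> c \<le> real \<xi> / real N \<and> real \<xi> / real N \<le> c + L} \<le> real N * L + 1"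
proof -
  define T where "T = {\<xi>::nat. \<xi> < N \<and> c \<le> real \<xi> / real N \<and> real \<xi> / real N \<le> c + L}"
  have fT: "finite T" unfolding T_def by simp
  show ?thesis
  proof (cases "T = {}")
    case True
    then have "card T = 0" by simp
    moreover have "0 \<le> real N * L" using L by simp
    ultimately have "real (card T) \<le> real N * L + 1" by simp
    then show ?thesis unfolding T_def .
  next
  case False
  then have ne: "T \<noteq> {}" by simp
  define m where "m = Min T"
  define m' where "m' = Max T"
  have mT: "m \<in> T" "m' \<in> T" unfolding m_def m'_def using fT ne by auto
  have sub: "T \<subseteq> {m..m'}" unfolding m_def m'_def using fT by auto
  have "card T \<le> card {m..m'}" using sub by (intro card_mono) auto
  also have "\<dots> = m' + 1 - m" by simp
  finally have cT0: "card T \<le> m' + 1 - m" .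
  have mm: "m \<le> m'" using mT(2) sub by auto
  have "real (card T) \<le> real (m' + 1 - m)" using cT0 by (simp only: of_nat_le_iff)
  also have "real (m' + 1 - m) = real m' + 1 - real m" using mm by (simp add: of_nat_diff)
  finally have cT: "real (card T) \<le> real m' + 1 - real m" .
  have "c \<le> real m / real N" "real m' / real N \<le> c + L" using mT unfolding T_def by auto
  then have "real m' / real N - real m / real N \<le> L" by linarith
  then have "(real m' - real m) / real N \<le> L" by (simp add: diff_divide_distrib)
  then have "real m' - real m \<le> real N * L" using N by (simp add: divide_le_eq mult.commute)
  then show ?thesis using cT unfolding T_def by linarith
  qed
qed

lemma NLk:
  assumes M: "0 < M" and N: "0 < N"
  shows "real N * Lk M (\<lambda>k. d k / real N) k = real N / real M ^ k + 2 * (\<Sum>i=1..k. d i / real M ^ (k - i))"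
proof (induction k)
  case 0 then show ?case by simp
next
  case (Suc k)
  have "real N * Lk M (\<lambda>k. d k / real N) (Suc k) = real N * Lk M (\<lambda>k. d k / real N) k / real M + 2 * d (Suc k)"
    using N by (simp add: algebra_simps)
  also have "\<dots> = (real N / real M ^ k + 2 * (\<Sum>i=1..k. d i / real M ^ (k - i))) / real M + 2 * d (Suc k)"
    using Suc by simp
  also have "\<dots> = real N / real M ^ Suc k + 2 * ((\<Sum>i=1..k. d i / real M ^ (k - i)) / real M) + 2 * d (Suc k)"
    by (simp add: add_divide_distrib)
  also have "(\<Sum>i=1..k. d i / real M ^ (k - i)) / real M = (\<Sum>i=1..k. d i / real M ^ (Suc k - i))"
    unfolding sum_divide_distrib
  proof (rule sum.cong[OF refl])
    fix i assume i: "i \<in> {1..k}"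
    then have "Suc k - i = Suc (k - i)" by auto
    then show "d i / real M ^ (k - i) / real M = d i / real M ^ (Suc k - i)" by simp
  qed
  also have "real N / real M ^ Suc k + 2 * (\<Sum>i=1..k. d i / real M ^ (Suc k - i)) + 2 * d (Suc k)
      = real N / real M ^ Suc k + 2 * (\<Sum>i=1..Suc k. d i / real M ^ (Suc k - i))"
    by (simp add: algebra_simps)
  finally show ?case .
qed

lemma Pm_cong: "S \<inter> {..<N} = T \<inter> {..<N} \<Longrightarrow> Pm N S = Pm N T"
  by (rule eq_matI) (auto simp: Pm_index)

lemma conj_prod:
  assumes F: "F \<in> carrier_mat N N" and U: "F * mat_adjoint F = 1\<^sub>m N"
    and P: "P \<in> carrier_mat N N" and T: "T \<in> carrier_mat N N" and P': "P' \<in> carrier_mat N N"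
  shows "(mat_adjoint F * P * F) * (mat_adjoint F * T) * (mat_adjoint F * P' * F) = mat_adjoint F * (P * T * mat_adjoint F * P') * F"
proof -
  have Fa: "mat_adjoint F \<in> carrier_mat N N" by (rule adj_carrier[OF F])
  have c: "F * (mat_adjoint F * X) = X" if X: "X \<in> carrier_mat N N" for X
  proof -
    have "F * (mat_adjoint F * X) = (F * mat_adjoint F) * X" using F Fa X by simp
    also have "\<dots> = X" unfolding U using X by simp
    finally show ?thesis .
  qed
  have "(mat_adjoint F * P * F) * (mat_adjoint F * T) * (mat_adjoint F * P' * F)
      = mat_adjoint F * (P * (F * (mat_adjoint F * (T * (mat_adjoint F * (P' * F))))))"
    using F Fa P T P' by (simp add: assoc_mult_mat[of _ N N _ N _ N])
  also have "\<dots> = mat_adjoint F * (P * (T * (mat_adjoint F * (P' * F))))"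
    using F Fa P T P' by (simp add: c)
  also have "\<dots> = mat_adjoint F * (P * T * mat_adjoint F * P') * F"
    using F Fa P T P' by (simp add: assoc_mult_mat[of _ N N _ N _ N])
  finally show ?thesis .
qed


lemma main_part:
  fixes chi :: "real \<Rightarrow> real" and M K l :: nat and AA :: "nat set" and d :: "nat \<Rightarrow> real"
  assumes chi: "Cc_inf_01 chi" and range: "\<And>x. 0 \<le> chi x \<and> chi x \<le> 1"
    and M2: "M \<ge> 2" and Asub: "AA \<subseteq> {0..<M}" and Ane: "AA \<noteq> {}" and K1: "K \<ge> 1"
    and l0: "0 < l" and lN: "real l \<le> ln (real (K * M)) / ln (real M)"
    and dh: "\<forall>j\<in>{1..l}. 0 < d j / real (K * M) \<and> d j / real (K * M) \<le> 2 / real M * set_circ_dist (fsupp chi) {0}"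
  shows "\<exists>A Z R. A \<in> carrier_mat (K * M) (K * M) \<and> fourier_multiplier (K * M) A \<and>
           (\<forall>z::complex. z \<noteq> 0 \<longrightarrow>
              Z z \<in> carrier_mat (K * M) (K * M) \<and> R z \<in> carrier_mat (K * M) (K * M) \<and>
              1\<^sub>m (K * M) = Z z * (baker M AA chi K - z \<cdot>\<^sub>m 1\<^sub>m (K * M)) + R z + A \<and>
              op_norm (K * M) (R z) \<le> (\<Sum>j<l. (1 / cmod z) ^ (j + 1) * gfun chi (d (l - j)))) \<and>
           real (vec_space.rank (K * M) A) \<le> 2 * real M powr (real l * (ln (real (card AA)) / ln (real M))) *
              (real (K * M) / real M ^ l + 2 * (\<Sum>k=1..l. d k / real M ^ (l - k)))"
proof -
  define N where "N = K * M"
  have Kp: "0 < K" and Mp: "0 < M" using K1 M2 by auto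
  have Np: "0 < N" unfolding N_def using Kp Mp by simp
  have Nr: "0 < real N" using Np by simp
  have finA: "finite AA" using Asub finite_subset by blast
  have dpos: "0 < d j" if "j \<in> {1..l}" for j
    using dh that Nr unfolding N_def[symmetric] by (auto simp: zero_less_divide_iff)
  define dd where "dd k = d k / real N" for k
  define \<Omega> where "\<Omega> k = {\<xi>::nat. real \<xi> / real N \<in> Uset M AA dd k}" for k
  define X where "X k = Xm N (\<Omega> k)" for k
  define B where "B = baker M AA chi K"
  define F where "F = fourier N"
  define T where "T = Tm K M AA chi"
  have Xc: "X k \<in> carrier_mat N N" for k unfolding X_def by simp
  have Bc: "B \<in> carrier_mat N N" unfolding B_def baker_def N_def by simp
  have Bopb: "opb N B 1" unfolding B_def N_def by (rule opb_baker[OF Kp Mp Asub range])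
  have Beq: "B = mat_adjoint F * T" unfolding B_def F_def T_def N_def by (rule baker_eq[OF Kp Asub])
  have X0: "X 0 = 1\<^sub>m N"
  proof -
    have "Pm N (\<Omega> 0) = Pm N UNIV"
      by (rule Pm_cong) (auto simp: \<Omega>_def divide_le_eq_1)
    then show ?thesis unfolding X_def Xm_def using Xm_UNIV[OF Np] unfolding Xm_def by simp
  qed
  have Y: "1\<^sub>m N - X k = Xm N (- \<Omega> k)" for k unfolding X_def by (rule one_minus_Xm[OF Np])
  have YB: "opb N ((1\<^sub>m N - X (Suc k)) * B) 1" for k
    unfolding Y using opb_mult[OF Xm_carrier Bc opb_Xm[OF Np] Bopb] by simp
  define eps where "eps k = (if k \<in> {1..l} then gfun chi (d k) else 1)" for k
  define \<alpha> where "\<alpha> = set_circ_dist (fsupp chi) {0}"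
  have E: "opb N ((1\<^sub>m N - X (Suc k)) * B * X k) (eps (Suc k))" for k
  proof (cases "Suc k \<in> {1..l}")
    case False
    have "opb N ((1\<^sub>m N - X (Suc k)) * B * X k) (1 * 1)"
      by (rule opb_mult[OF mult_carrier_mat[OF minus_carrier_mat[OF Xc] Bc] Xc YB]) (auto simp: X_def opb_Xm[OF Np])
    then show ?thesis unfolding eps_def using False by simp
  next
    case True
    define D where "D = d (Suc k)"
    have D: "0 < D" unfolding D_def using dpos[OF True] .
    have DN: "D / real N \<le> 2 / real M * \<alpha>" unfolding D_def \<alpha>_def N_def using dh True by blast
    have dchi: "D \<le> 2 * real K * min (real j / real K) (1 - real j / real K)"
      if j: "j < K" and cj: "chi (real j / real K) \<noteq> 0" for j
    proof -
      have "real j / real K \<in> {x. chi x \<noteq> 0}" using cj by simp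
      then have mem: "real j / real K \<in> fsupp chi" unfolding fsupp_def by (rule subsetD[OF closure_subset])
      have sub: "fsupp chi \<subseteq> {0<..<1}" using chi unfolding Cc_inf_01_def by simp
      have bdd: "bdd_below {circ_dist x y | x y. x \<in> fsupp chi \<and> y \<in> {0}}"
      proof (rule bdd_belowI[of _ 0])
        fix v assume "v \<in> {circ_dist x y | x y. x \<in> fsupp chi \<and> y \<in> {0}}"
        then obtain x where x: "x \<in> fsupp chi" "v = circ_dist x 0" by auto
        then have "0 < x" "x < 1" using sub by auto
        then show "0 \<le> v" using x unfolding circ_dist_def by simp
      qed
      have "\<alpha> \<le> circ_dist (real j / real K) 0"
        unfolding \<alpha>_def set_circ_dist_def using mem by (intro cInf_lower[OF _ bdd]) blast
      also have "\<dots> = min (real j / real K) (1 - real j / real K)" unfolding circ_dist_def by simp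
      finally have a: "\<alpha> \<le> min (real j / real K) (1 - real j / real K)" .
      have "D \<le> 2 / real M * \<alpha> * real N" using DN Nr by (simp add: divide_le_eq)
      also have "\<dots> = 2 * real K * \<alpha>" unfolding N_def using Mp by simp
      also have "\<dots> \<le> 2 * real K * min (real j / real K) (1 - real j / real K)"
        using a Kp by (intro mult_left_mono) auto
      finally show ?thesis .
    qed
    have sep: "D < \<bar>real j - real \<xi> / real M\<bar>"
      if \<xi>: "\<xi> < K * M" and a: "a \<in> AA" and j: "j < K" and in1: "\<xi> \<in> \<Omega> k"
        and out: "a * K + j \<notin> \<Omega> (Suc k)" and cj: "chi (real j / real K) \<noteq> 0" for \<xi> a j
    proof (rule ccontr)
      assume "\<not> D < \<bar>real j - real \<xi> / real M\<bar>"
      then have le: "\<bar>real j - real \<xi> / real M\<bar> \<le> D" by simp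
      have x: "real \<xi> / real N \<in> Uset M AA dd k" using in1 unfolding \<Omega>_def by simp
      have "real (a * K + j) / real N - (real a + real \<xi> / real N) / real M = (real j - real \<xi> / real M) / real N"
        unfolding N_def using Kp Mp by (simp add: field_simps)
      then have "\<bar>real (a * K + j) / real N - (real a + real \<xi> / real N) / real M\<bar> \<le> dd (Suc k)"
        unfolding dd_def D_def[symmetric] using le Nr by (simp add: abs_div divide_right_mono)
      then have "real (a * K + j) / real N \<in> Uset M AA dd (Suc k)" using a x by auto
      then show False using out unfolding \<Omega>_def by simp
    qed
    have key: "opb N (Pm N (- \<Omega> (Suc k)) * T * mat_adjoint F * Pm N (\<Omega> k)) (gfun chi D)"
      unfolding N_def T_def F_def
      by (rule key_estimate[OF chi range Kp Mp D dchi sep]) auto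
    have eq: "(1\<^sub>m N - X (Suc k)) * B * X k = mat_adjoint F * (Pm N (- \<Omega> (Suc k)) * T * mat_adjoint F * Pm N (\<Omega> k)) * F"
      unfolding Y Beq unfolding X_def Xm_def F_def[symmetric]
      by (rule conj_prod) (auto simp: F_def fourier_carrier fourier_mult_adj[OF Np] fourier_mult_adj[OF Np, unfolded N_def] T_def N_def Tm_carrier)
    have Qc: "Pm N (- \<Omega> (Suc k)) * T * mat_adjoint F * Pm N (\<Omega> k) \<in> carrier_mat N N"
      unfolding T_def F_def N_def using Tm_carrier Fa_carrier Pm_carrier by (metis mult_carrier_mat)
    have "opb N ((1\<^sub>m N - X (Suc k)) * B * X k) (gfun chi D)"
      unfolding eq F_def
      by (rule opb_unitary_conj[OF fourier_carrier fourier_adj_mult[OF Np] fourier_mult_adj[OF Np] Qc[unfolded F_def] key[unfolded F_def]])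
    then show ?thesis unfolding eps_def D_def using True by simp
  qed
  define Am where "Am = X l"
  define Z where "Z z = Zs N B X z l" for z
  define R where "R z = Rs N B X z l" for z
  have part1: "\<forall>z::complex. z \<noteq> 0 \<longrightarrow>
      Z z \<in> carrier_mat N N \<and> R z \<in> carrier_mat N N \<and>
      1\<^sub>m N = Z z * (B - z \<cdot>\<^sub>m 1\<^sub>m N) + R z + Am \<and>
      op_norm N (R z) \<le> (\<Sum>j<l. (1 / cmod z) ^ (j + 1) * gfun chi (d (l - j)))"
  proof (intro allI impI conjI)
    fix z :: complex assume z: "z \<noteq> 0"
    show Zc: "Z z \<in> carrier_mat N N" and Rc: "R z \<in> carrier_mat N N"
      unfolding Z_def R_def using ZR_carrier[OF Bc Xc] by auto
    have id: "1\<^sub>m N - X l = Z z * (B - z \<cdot>\<^sub>m 1\<^sub>m N) + R z"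
      unfolding Z_def R_def by (rule ZR_identity[where B=B and N=N and X=X and z=z and k=l, OF Bc Xc X0 z])
    have Wc: "Z z * (B - z \<cdot>\<^sub>m 1\<^sub>m N) \<in> carrier_mat N N" using Zc Bc by (auto intro!: mult_carrier_mat minus_carrier_mat)
    show "1\<^sub>m N = Z z * (B - z \<cdot>\<^sub>m 1\<^sub>m N) + R z + Am"
    proof (rule eq_matI)
      fix i j assume "i < dim_row (Z z * (B - z \<cdot>\<^sub>m 1\<^sub>m N) + R z + Am)" "j < dim_col (Z z * (B - z \<cdot>\<^sub>m 1\<^sub>m N) + R z + Am)"
      then have i: "i < N" and j: "j < N" unfolding Am_def using Xc[of l] by auto
      have "(1\<^sub>m N - X l) $$ (i, j) = (Z z * (B - z \<cdot>\<^sub>m 1\<^sub>m N) + R z) $$ (i, j)" using id by simp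
      then have "1\<^sub>m N $$ (i, j) - X l $$ (i, j) = (Z z * (B - z \<cdot>\<^sub>m 1\<^sub>m N)) $$ (i, j) + R z $$ (i, j)"
        using i j Xc[of l] Rc Wc by simp
      then show "1\<^sub>m N $$ (i, j) = (Z z * (B - z \<cdot>\<^sub>m 1\<^sub>m N) + R z + Am) $$ (i, j)"
        unfolding Am_def using i j Xc[of l] Rc Wc by (simp add: algebra_simps)
    qed (use Xc[of l] Am_def in auto)
    have rb: "opb N (R z) (\<Sum>j<l. (1 / cmod z) ^ (j + 1) * eps (l - j))"
      unfolding R_def by (rule Rs_bound[where B=B and N=N and X=X and z=z and k=l and eps=eps, OF Bc Xc YB E z])
    have "(\<Sum>j<l. (1 / cmod z) ^ (j + 1) * eps (l - j)) = (\<Sum>j<l. (1 / cmod z) ^ (j + 1) * gfun chi (d (l - j)))"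
      unfolding eps_def by (intro sum.cong refl) auto
    moreover have "0 \<le> (\<Sum>j<l. (1 / cmod z) ^ (j + 1) * gfun chi (d (l - j)))"
      using gfun_nonneg[OF chi] dpos by (intro sum_nonneg mult_nonneg_nonneg) auto
    ultimately show "op_norm N (R z) \<le> (\<Sum>j<l. (1 / cmod z) ^ (j + 1) * gfun chi (d (l - j)))"
      using opb_op_norm rb by metis
  qed
  have rank: "real (vec_space.rank N Am) \<le> 2 * real M powr (real l * (ln (real (card AA)) / ln (real M))) *
              (real N / real M ^ l + 2 * (\<Sum>k=1..l. d k / real M ^ (l - k)))"
  proof -
    define L where "L = Lk M dd l"
    define Q where "Q = real N / real M ^ l + 2 * (\<Sum>k=1..l. d k / real M ^ (l - k))"
    have NL: "real N * L = Q" unfolding L_def Q_def dd_def by (rule NLk[OF Mp Np])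
    have Ml: "real M ^ l \<le> real N"
    proof -
      have lnM: "0 < ln (real M)" using M2 by simp
      have "real l * ln (real M) \<le> ln (real N)" using lN lnM unfolding N_def by (simp add: le_divide_eq)
      then have "ln (real M ^ l) \<le> ln (real N)" using Mp by (simp add: ln_realpow)
      then show ?thesis using Mp Np by simp
    qed
    have Q1: "1 \<le> Q"
    proof -
      have "1 \<le> real N / real M ^ l" using Ml Mp by simp
      moreover have "0 \<le> (\<Sum>k=1..l. d k / real M ^ (l - k))" using dpos by (intro sum_nonneg divide_nonneg_pos less_imp_le) (auto simp: Mp)
      ultimately show ?thesis unfolding Q_def by linarith
    qed
    have L0: "0 \<le> L" using NL Q1 Nr by (smt (verit) mult_pos_neg)
    obtain W where W: "finite W" "card W \<le> card AA ^ l" "Uset M AA dd l \<subseteq> (\<Union>c\<in>W. {c..c + L})"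
      using Uset_cover[OF finA Mp] unfolding L_def by blast
    define TT where "TT c = {\<xi>::nat. \<xi> < N \<and> c \<le> real \<xi> / real N \<and> real \<xi> / real N \<le> c + L}" for c
    have sub: "\<Omega> l \<inter> {..<N} \<subseteq> (\<Union>c\<in>W. TT c)"
    proof
      fix \<xi> assume "\<xi> \<in> \<Omega> l \<inter> {..<N}"
      then have m: "real \<xi> / real N \<in> Uset M AA dd l" and x: "\<xi> < N" unfolding \<Omega>_def by auto
      have "real \<xi> / real N \<in> (\<Union>c\<in>W. {c..c + L})" using W(3) m by (rule subsetD)
      then obtain c where "c \<in> W" "real \<xi> / real N \<in> {c..c + L}" by (rule UN_E)
      then show "\<xi> \<in> (\<Union>c\<in>W. TT c)" unfolding TT_def using x by auto
    qed
    have "vec_space.rank N Am \<le> card (\<Omega> l \<inter> {..<N})" unfolding Am_def X_def by (rule rank_Xm)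
    also have "\<dots> \<le> card (\<Union>c\<in>W. TT c)"
    proof (rule card_mono[OF _ sub])
      show "finite (\<Union>c\<in>W. TT c)" using W(1) unfolding TT_def by auto
    qed
    also have "\<dots> \<le> (\<Sum>c\<in>W. card (TT c))" by (rule card_UN_le[OF W(1)])
    finally have r1: "real (vec_space.rank N Am) \<le> (\<Sum>c\<in>W. real (card (TT c)))" by (metis of_nat_le_iff of_nat_sum)
    also have "\<dots> \<le> (\<Sum>c\<in>W. real N * L + 1)"
      unfolding TT_def by (intro sum_mono card_interval_nat[OF Np L0])
    also have "\<dots> = real (card W) * (Q + 1)" using NL by simp
    also have "\<dots> \<le> real (card AA) ^ l * (Q + 1)"
      using W(2) Q1 by (intro mult_right_mono) (auto simp: of_nat_le_iff[symmetric] simp del: of_nat_le_iff)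
    also have "\<dots> \<le> 2 * real (card AA) ^ l * Q"
    proof -
      have "real (card AA) ^ l * 1 \<le> real (card AA) ^ l * Q" by (rule mult_left_mono[OF Q1]) simp
      then show ?thesis by (simp add: algebra_simps)
    qed
    also have "real (card AA) ^ l = real M powr (real l * (ln (real (card AA)) / ln (real M)))"
    proof -
      have cA: "0 < card AA" using finA Ane by (simp add: card_gt_0_iff)
      have lnM: "0 < ln (real M)" using M2 by simp
      have "real M powr (real l * (ln (real (card AA)) / ln (real M))) = exp (real l * ln (real (card AA)))"
        unfolding powr_def using Mp lnM by simp
      also have "\<dots> = real (card AA) ^ l" using cA by (simp add: exp_of_nat_mult[symmetric] ln_realpow[symmetric])
      finally show ?thesis by simp
    qed
    finally show ?thesis unfolding Q_def .
  qed
  show ?thesis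
    using Xm_carrier[of N "\<Omega> l"] Xm_fm[of N "\<Omega> l"] part1 rank
    unfolding N_def[symmetric] B_def[symmetric] Am_def X_def by blast
qed


theorem proposition2:
  fixes chi :: "real \<Rightarrow> real"
  assumes chi_smooth: "Cc_inf_01 chi"
    and chi_range: "\<And>x. 0 \<le> chi x \<and> chi x \<le> 1"
  shows "\<exists>g :: real \<Rightarrow> real.
     (\<forall>x>0. 0 \<le> g x) \<and>
     (\<forall>n::nat. \<exists>C>0. \<forall>x>0. g x \<le> C * x powr (- real n)) \<and>
     (\<forall>s>1. gevrey_c01 s chi \<longrightarrow> (\<exists>C>0. \<exists>c>0. \<forall>x>0. g x \<le> C * exp (- c * x powr (1 / s)))) \<and>
     (\<forall>(M::nat) (\<A>::nat set) (K::nat) (l::nat) (d::nat \<Rightarrow> real).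
        M \<ge> 2 \<longrightarrow> \<A> \<subseteq> {0..<M} \<longrightarrow> \<A> \<noteq> {} \<longrightarrow> K \<ge> 1 \<longrightarrow>
        0 < l \<longrightarrow> real l \<le> ln (real (K * M)) / ln (real M) \<longrightarrow>
        (\<forall>j\<in>{1..l}. 0 < d j / real (K * M) \<and>
            d j / real (K * M) \<le> 2 / real M * set_circ_dist (fsupp chi) {0}) \<longrightarrow>
        (let N = K * M; \<delta> = ln (real (card \<A>)) / ln (real M) in
         \<exists>A Z \<R>. A \<in> carrier_mat N N \<and> fourier_multiplier N A \<and>
           (\<forall>z::complex. z \<noteq> 0 \<longrightarrow>
              Z z \<in> carrier_mat N N \<and> \<R> z \<in> carrier_mat N N \<and>
              1\<^sub>m N = Z z * (baker M \<A> chi K - z \<cdot>\<^sub>m 1\<^sub>m N) + \<R> z + A \<and>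
              op_norm N (\<R> z) \<le> (\<Sum>j<l. (1 / cmod z) ^ (j + 1) * g (d (l - j)))) \<and>
           real (vec_space.rank N A) \<le> 2 * real M powr (real l * \<delta>) *
              (real N / real M ^ l + 2 * (\<Sum>k=1..l. d k / real M ^ (l - k)))))"
  proof (rule exI[of _ "gfun chi"], intro conjI)
  show "\<forall>x>0. 0 \<le> gfun chi x" using gfun_nonneg[OF chi_smooth] by blast
  show "\<forall>n::nat. \<exists>C>0. \<forall>x>0. gfun chi x \<le> C * x powr (- real n)" using gfun_poly[OF chi_smooth] by blast
  show "\<forall>s>1. gevrey_c01 s chi \<longrightarrow> (\<exists>C>0. \<exists>c>0. \<forall>x>0. gfun chi x \<le> C * exp (- c * x powr (1 / s)))"
    using gfun_gevrey[OF chi_smooth] by blast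
qed (unfold Let_def, use main_part[OF chi_smooth chi_range] in blast)

end
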